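(* Let $M$ be an $n$-paving matroid on $[d]$, let $p\in[d]$ be an element that is not a coloop (i.e., $p$ lies in some circuit), and let $M'=M\setminus\{p\}$. Then: (i) if $M'$ is liftable and $\deg(p)\le1$, then $M$ is liftable; (ii) if $M'$ is not liftable and $\deg(p)\ge1$, then $M$ is not liftable.
   Context: An $n$-paving matroid is a matroid of rank $n$ all of whose circuits have size $n$ or $n+1$. A dependent hyperplane is a maximal subset of size at least $n$ all of whose $n$-subsets are circuits; $\deg(p)$ is the number of dependent hyperplanes of $M$ containing $p$. For a matroid $N$ on a finite set $E$, the circuit variety $V_{\mathcal{C}(N)}$ is the set of tuples $(\gamma_e)_{e\in E}$ of vectors in $\mathbb{C}^n$ such that $(\gamma_e)_{e\in S}$ is linearly dependent for every dependent set $S$ of $N$. $N$ is liftable if for every tuple $(\gamma_e)_{e\in E}$ in $\mathbb{C}^n$ spanning a hyperplane $H\subset\mathbb{C}^n$ and every $q\notin H$, there exist scalars $z_e\in\mathbb{C}$ such that $(\gamma_e+z_eq)_{e\in E}\in V_{\mathcal{C}(N)}$ and the vectors $\gamma_e+z_eq$ do not all lie in a common hyperplane. Both $M$ and $M'$ are considered with vectors in $\mathbb{C}^n$. *)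

theory Defs
  imports "HOL-Analysis.Analysis"
begin

definition matroid :: "'a set \<Rightarrow> ('a set \<Rightarrow> bool) \<Rightarrow> bool" where
  "matroid E indep \<longleftrightarrow> finite E \<and> indep {} \<and>
     (\<forall>X. indep X \<longrightarrow> X \<subseteq> E) \<and>
     (\<forall>X Y. indep X \<and> Y \<subseteq> X \<longrightarrow> indep Y) \<and>
     (\<forall>X Y. indep X \<and> indep Y \<and> card X < card Y \<longrightarrow> (\<exists>y\<in>Y - X. indep (insert y X)))"

definition mrank :: "('a set \<Rightarrow> bool) \<Rightarrow> nat" where
  "mrank indep = Max {card I | I. indep I}"

definition circuit :: "'a set \<Rightarrow> ('a set \<Rightarrow> bool) \<Rightarrow> 'a set \<Rightarrow> bool" where
  "circuit E indep C \<longleftrightarrow> C \<subseteq> E \<and> \<not> indep C \<and> (\<forall>x\<in>C. indep (C - {x}))"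

definition dependent_set :: "'a set \<Rightarrow> ('a set \<Rightarrow> bool) \<Rightarrow> 'a set \<Rightarrow> bool" where
  "dependent_set E indep S \<longleftrightarrow> S \<subseteq> E \<and> \<not> indep S"

definition mdelete :: "('a set \<Rightarrow> bool) \<Rightarrow> 'a \<Rightarrow> ('a set \<Rightarrow> bool)" where
  "mdelete indep p = (\<lambda>X. indep X \<and> p \<notin> X)"

definition paving :: "nat \<Rightarrow> 'a set \<Rightarrow> ('a set \<Rightarrow> bool) \<Rightarrow> bool" where
  "paving n E indep \<longleftrightarrow> mrank indep = n \<and>
     (\<forall>C. circuit E indep C \<longrightarrow> card C = n \<or> card C = n + 1)"

definition hyp_candidate :: "nat \<Rightarrow> 'a set \<Rightarrow> ('a set \<Rightarrow> bool) \<Rightarrow> 'a set \<Rightarrow> bool" where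
  "hyp_candidate n E indep S \<longleftrightarrow> S \<subseteq> E \<and> card S \<ge> n \<and>
     (\<forall>T. T \<subseteq> S \<and> card T = n \<longrightarrow> circuit E indep T)"

definition dep_hyperplane :: "nat \<Rightarrow> 'a set \<Rightarrow> ('a set \<Rightarrow> bool) \<Rightarrow> 'a set \<Rightarrow> bool" where
  "dep_hyperplane n E indep S \<longleftrightarrow> hyp_candidate n E indep S \<and>
     (\<forall>S'. hyp_candidate n E indep S' \<and> S \<subseteq> S' \<longrightarrow> S' = S)"

definition mdeg :: "nat \<Rightarrow> 'a set \<Rightarrow> ('a set \<Rightarrow> bool) \<Rightarrow> 'a \<Rightarrow> nat" where
  "mdeg n E indep p = card {S. dep_hyperplane n E indep S \<and> p \<in> S}"

definition clin_dependent :: "'a set \<Rightarrow> ('a \<Rightarrow> complex ^ ('n::finite)) \<Rightarrow> bool" where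
  "clin_dependent S \<gamma> \<longleftrightarrow> (\<exists>c::'a \<Rightarrow> complex. (\<exists>e\<in>S. c e \<noteq> 0) \<and> (\<Sum>e\<in>S. c e *s \<gamma> e) = 0)"

definition cspan_fam :: "'a set \<Rightarrow> ('a \<Rightarrow> complex ^ ('n::finite)) \<Rightarrow> (complex ^ ('n::finite)) set" where
  "cspan_fam S \<gamma> = {(\<Sum>e\<in>S. c e *s \<gamma> e) | c. True}"

definition chyperplane :: "(complex ^ ('n::finite)) set \<Rightarrow> bool" where
  "chyperplane H \<longleftrightarrow> (\<exists>a::complex ^ ('n::finite). a \<noteq> 0 \<and> H = {v. (\<Sum>i\<in>UNIV. a $ i * v $ i) = 0})"

definition circuit_variety :: "('n::finite) itself \<Rightarrow> 'a set \<Rightarrow> ('a set \<Rightarrow> bool) \<Rightarrow> ('a \<Rightarrow> complex ^ ('n::finite)) set" where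
  "circuit_variety _ E indep =
     {\<gamma>. \<forall>S. dependent_set E indep S \<longrightarrow> clin_dependent S \<gamma>}"

definition liftable :: "('n::finite) itself \<Rightarrow> 'a set \<Rightarrow> ('a set \<Rightarrow> bool) \<Rightarrow> bool" where
  "liftable T E indep \<longleftrightarrow>
     (\<forall>(\<gamma>::'a \<Rightarrow> complex ^ ('n::finite)) H q. chyperplane H \<and> cspan_fam E \<gamma> = H \<and> q \<notin> H \<longrightarrow>
        (\<exists>z::'a \<Rightarrow> complex.
           (\<lambda>e. \<gamma> e + z e *s q) \<in> circuit_variety T E indep \<and>
           \<not> (\<exists>H'. chyperplane H' \<and> (\<forall>e\<in>E. \<gamma> e + z e *s q \<in> H'))))"

end

theory Submission
  imports Defs
begin


definition dotc :: "complex^'n \<Rightarrow> complex^'n \<Rightarrow> complex" where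
  "dotc a x = (\<Sum>i\<in>UNIV. a$i * x$i)"

lemma dotc_add[simp]: "dotc a (x + y) = dotc a x + dotc a y"
  by (simp add: dotc_def distrib_left sum.distrib)
lemma dotc_diff[simp]: "dotc a (x - y) = dotc a x - dotc a y"
  by (simp add: dotc_def right_diff_distrib sum_subtractf)
lemma dotc_scale[simp]: "dotc a (c *s x) = c * dotc a x"
  by (simp add: dotc_def sum_distrib_left algebra_simps)
lemma dotc_zero[simp]: "dotc a 0 = 0"
  by (simp add: dotc_def)
lemma dotc_sum: "dotc a (\<Sum>e\<in>S. f e) = (\<Sum>e\<in>S. dotc a (f e))"
  by (induction S rule: infinite_finite_induct) auto
lemma dotc_axis: "dotc a (axis i 1) = a $ i"
proof -
  have "dotc a (axis i 1) = (\<Sum>j\<in>UNIV. if j = i then a $ i else 0)"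
    unfolding dotc_def by (rule sum.cong) (auto simp: axis_def)
  then show ?thesis by simp
qed
lemma dotc_nonzero_ex: assumes "a \<noteq> 0" shows "\<exists>x. dotc a x \<noteq> 0"
proof -
  obtain i where "a $ i \<noteq> 0" using assms by (metis vec_eq_iff zero_index)
  then show ?thesis using dotc_axis[of a i] by metis
qed

lemma hyperplane_ex: "chyperplane H \<longleftrightarrow> (\<exists>a. a \<noteq> 0 \<and> H = {v. dotc a v = 0})"
  unfolding chyperplane_def dotc_def by simp

lemma vsum_split: "(\<Sum>e\<in>S. f e *s x e + g e *s y e) = (\<Sum>e\<in>S. f e *s x e) + (\<Sum>e\<in>S. g e *s y e)"
  by (simp add: sum.distrib)

lemma subspace_dotc: "vec.subspace {v. dotc a v = 0}"
  unfolding vec.subspace_def by auto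

lemma cspan_memI: "x = (\<Sum>e\<in>S. c e *s v e) \<Longrightarrow> x \<in> cspan_fam S v"
  unfolding cspan_fam_def by blast

lemma cspan_eq: assumes "finite S" shows "cspan_fam S v = vec.span (v ` S)"
proof
  show "cspan_fam S v \<subseteq> vec.span (v ` S)"
  proof
    fix x assume "x \<in> cspan_fam S v"
    then obtain c where x: "x = (\<Sum>e\<in>S. c e *s v e)" unfolding cspan_fam_def by blast
    show "x \<in> vec.span (v ` S)" unfolding x
      by (rule vec.span_sum, rule vec.span_scale, rule vec.span_base) auto
  qed
  have sub: "vec.subspace (cspan_fam S v)"
    unfolding vec.subspace_def cspan_fam_def
  proof (intro conjI ballI allI)
    show "0 \<in> {\<Sum>e\<in>S. c e *s v e |c. True}"
      by (rule CollectI, rule exI[of _ "\<lambda>_. 0"]) simp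
  next
    fix x y assume "x \<in> {\<Sum>e\<in>S. c e *s v e |c. True}" "y \<in> {\<Sum>e\<in>S. c e *s v e |c. True}"
    then obtain c1 c2 where "x = (\<Sum>e\<in>S. c1 e *s v e)" "y = (\<Sum>e\<in>S. c2 e *s v e)" by auto
    then have "x + y = (\<Sum>e\<in>S. (c1 e + c2 e) *s v e)"
      by (simp add: vector_sadd_rdistrib sum.distrib)
    then show "x + y \<in> {\<Sum>e\<in>S. c e *s v e |c. True}"
      by (simp only: mem_Collect_eq) (rule exI[of _ "\<lambda>e. c1 e + c2 e"], simp)
  next
    fix k x assume "x \<in> {\<Sum>e\<in>S. c e *s v e |c. True}"
    then obtain c1 where "x = (\<Sum>e\<in>S. c1 e *s v e)" by auto
    then have "k *s x = (\<Sum>e\<in>S. (k * c1 e) *s v e)"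
      by (simp add: vec.scale_sum_right vector_smult_assoc)
    then show "k *s x \<in> {\<Sum>e\<in>S. c e *s v e |c. True}"
      by (simp only: mem_Collect_eq) (rule exI[of _ "\<lambda>e. k * c1 e"], simp)
  qed
  have "v ` S \<subseteq> cspan_fam S v"
  proof
    fix x assume "x \<in> v ` S"
    then obtain e where e: "e \<in> S" "x = v e" by auto
    have "(\<Sum>f\<in>S. (if f = e then 1 else 0) *s v f) = (\<Sum>f\<in>S. if f = e then v f else 0)"
      by (rule sum.cong) auto
    also have "\<dots> = v e" using assms e(1) by simp
    finally have "(\<Sum>f\<in>S. (if f = e then 1 else 0) *s v f) = v e" .
    then show "x \<in> cspan_fam S v" using e cspan_memI[where x=x and S=S and c="\<lambda>f. if f = e then 1 else 0" and v=v] by simp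
  qed
  then show "vec.span (v ` S) \<subseteq> cspan_fam S v"
    using vec.span_minimal sub by blast
qed

lemma cspan_base: "finite S \<Longrightarrow> e \<in> S \<Longrightarrow> v e \<in> cspan_fam S v"
  by (simp add: cspan_eq vec.span_base)

lemma cspan_sum: "finite S \<Longrightarrow> (\<Sum>e\<in>S. c e *s v e) \<in> cspan_fam S v"
  unfolding cspan_fam_def by blast

lemma cspan_cong: assumes "\<And>e. e \<in> S \<Longrightarrow> v e = w e" shows "cspan_fam S v = cspan_fam S w"
proof -
  have "\<And>c. (\<Sum>e\<in>S. c e *s v e) = (\<Sum>e\<in>S. c e *s w e)" using assms by (intro sum.cong) auto
  then show ?thesis unfolding cspan_fam_def by simp
qed

lemma clin_dep_cong: assumes "\<And>e. e \<in> S \<Longrightarrow> v e = w e" shows "clin_dependent S v = clin_dependent S w"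
proof -
  have "\<And>c. (\<Sum>e\<in>S. c e *s v e) = (\<Sum>e\<in>S. c e *s w e)" using assms by (intro sum.cong) auto
  then show ?thesis unfolding clin_dependent_def by simp
qed

lemma cspan_mono: assumes "finite S'" "S \<subseteq> S'" shows "cspan_fam S v \<subseteq> cspan_fam S' v"
proof -
  have "finite S" using assms rev_finite_subset by blast
  then show ?thesis using cspan_eq[of S v] cspan_eq[OF assms(1), of v] vec.span_mono[OF image_mono[OF assms(2)]]
    by simp
qed

lemma clin_dep_mono: assumes "finite S'" "S \<subseteq> S'" "clin_dependent S v" shows "clin_dependent S' v"
proof -
  obtain c e0 where c: "e0 \<in> S" "c e0 \<noteq> 0" "(\<Sum>e\<in>S. c e *s v e) = 0"
    using assms(3) unfolding clin_dependent_def by blast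
  define d where "d = (\<lambda>e. if e \<in> S then c e else 0)"
  have "(\<Sum>e\<in>S'. d e *s v e) = (\<Sum>e\<in>S. d e *s v e)"
    by (rule sum.mono_neutral_right[OF assms(1) assms(2)]) (simp add: d_def)
  also have "\<dots> = (\<Sum>e\<in>S. c e *s v e)" by (rule sum.cong) (auto simp: d_def)
  finally have "(\<Sum>e\<in>S'. d e *s v e) = 0" using c by simp
  moreover have "e0 \<in> S'" "d e0 \<noteq> 0" using c assms(2) by (auto simp: d_def)
  ultimately show ?thesis unfolding clin_dependent_def by blast
qed

lemma fresh_nat: "finite (S::nat set) \<Longrightarrow> \<exists>i. i \<notin> S"
  using ex_new_if_finite infinite_UNIV_nat by blast

lemma sum_insert_upd:
  assumes "finite S" "i \<notin> S"
  shows "(\<Sum>e\<in>insert i S. c e *s (v(i := x)) e) = c i *s x + (\<Sum>e\<in>S. c e *s v e)"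
proof -
  have "(\<Sum>e\<in>S. c e *s (v(i := x)) e) = (\<Sum>e\<in>S. c e *s v e)"
    using assms(2) by (intro sum.cong) auto
  then show ?thesis using assms by simp
qed

lemma clin_dep_card:
  fixes v :: "'a \<Rightarrow> complex^'n"
  assumes "finite S" "CARD('n) < card S"
  shows "clin_dependent S v"
proof (cases "inj_on v S")
  case False
  then obtain e1 e2 where e: "e1 \<in> S" "e2 \<in> S" "e1 \<noteq> e2" "v e1 = v e2"
    unfolding inj_on_def by blast
  define c where "c = (\<lambda>e. if e = e1 then (1::complex) else if e = e2 then -1 else 0)"
  have "(\<Sum>e\<in>S. c e *s v e) = (\<Sum>e\<in>{e1, e2}. c e *s v e)"
    by (rule sum.mono_neutral_right[OF assms(1)]) (use e in \<open>auto simp: c_def\<close>)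
  also have "\<dots> = v e1 - v e2" using e(3) by (simp add: c_def)
  also have "\<dots> = 0" using e by simp
  finally have "(\<Sum>e\<in>S. c e *s v e) = 0" .
  moreover have "c e1 \<noteq> 0" by (simp add: c_def)
  ultimately show ?thesis unfolding clin_dependent_def using e(1) by blast
next
  case True
  have cardim: "card (v ` S) = card S" using True card_image by blast
  have "\<not> vec.independent (v ` S)"
  proof
    assume "vec.independent (v ` S)"
    then have "card (v ` S) \<le> vec.dim (v ` S)" using vec.independent_bound_general by blast
    also have "\<dots> \<le> CARD('n)" by (rule dim_subset_UNIV_cart_gen)
    finally show False using cardim assms by simp
  qed
  then obtain u where u: "\<exists>x\<in>v ` S. u x \<noteq> 0" "(\<Sum>x\<in>v ` S. u x *s x) = 0"
    using vec.dependent_finite[of "v ` S"] assms(1) by auto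
  have "(\<Sum>e\<in>S. u (v e) *s v e) = (\<Sum>x\<in>v ` S. u x *s x)"
    using sum.reindex[OF True, of "\<lambda>x. u x *s x"] by simp
  then show ?thesis unfolding clin_dependent_def using u by auto
qed

lemma clin_dep_hyp:
  fixes v :: "nat \<Rightarrow> complex^'n"
  assumes "a \<noteq> 0" "finite S" "CARD('n) \<le> card S" "\<And>e. e \<in> S \<Longrightarrow> dotc a (v e) = 0"
  shows "clin_dependent S v"
proof -
  obtain x where x: "dotc a x \<noteq> 0" using dotc_nonzero_ex assms(1) by blast
  obtain i where i: "i \<notin> S" using fresh_nat assms(2) by blast
  have "clin_dependent (insert i S) (v(i := x))"
    using assms(2,3) i by (intro clin_dep_card) auto
  then obtain c where c: "\<exists>e\<in>insert i S. c e \<noteq> 0" "(\<Sum>e\<in>insert i S. c e *s (v(i := x)) e) = 0"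
    unfolding clin_dependent_def by blast
  then have eq: "c i *s x + (\<Sum>e\<in>S. c e *s v e) = 0" using sum_insert_upd[OF assms(2) i, of c v x] by simp
  then have "dotc a (c i *s x + (\<Sum>e\<in>S. c e *s v e)) = 0" by simp
  moreover have "dotc a (\<Sum>e\<in>S. c e *s v e) = 0" using assms(4) by (simp add: dotc_sum)
  ultimately have "c i = 0" using x by simp
  then show ?thesis using c eq unfolding clin_dependent_def by auto
qed

lemma indep_insert:
  assumes "finite S" "e \<notin> S" "\<not> clin_dependent S v" "v e \<notin> cspan_fam S v"
  shows "\<not> clin_dependent (insert e S) v"
proof
  assume "clin_dependent (insert e S) v"
  then obtain c where c: "\<exists>f\<in>insert e S. c f \<noteq> 0" "(\<Sum>f\<in>insert e S. c f *s v f) = 0"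
    unfolding clin_dependent_def by blast
  then have eq: "c e *s v e + (\<Sum>f\<in>S. c f *s v f) = 0" using assms by simp
  show False
  proof (cases "c e = 0")
    case True
    then show ?thesis using eq c assms(3) unfolding clin_dependent_def by auto
  next
    case False
    have "v e = (\<Sum>f\<in>S. (- c f / c e) *s v f)"
    proof -
      have "c e *s v e = - (\<Sum>f\<in>S. c f *s v f)" using eq by (simp add: eq_neg_iff_add_eq_0)
      then have "(1 / c e) *s (c e *s v e) = (1 / c e) *s (- (\<Sum>f\<in>S. c f *s v f))" by simp
      then have "v e = (1 / c e) *s (- (\<Sum>f\<in>S. c f *s v f))"
        using False by (simp add: vector_smult_assoc)
      also have "\<dots> = (\<Sum>f\<in>S. (- c f / c e) *s v f)"
        by (simp add: vec.scale_sum_right vector_smult_assoc sum_negf[symmetric] vec.scale_minus_right)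
      finally show ?thesis .
    qed
    then show False using assms(4) cspan_sum[OF assms(1), of "\<lambda>f. - c f / c e" v] by simp
  qed
qed

lemma in_cspan_dep:
  assumes "finite S" "e \<notin> S" "v e \<in> cspan_fam S v"
  shows "clin_dependent (insert e S) v"
proof -
  obtain c where c: "v e = (\<Sum>f\<in>S. c f *s v f)" using assms(3) unfolding cspan_fam_def by blast
  let ?d = "c(e := -1)"
  have "(\<Sum>f\<in>insert e S. ?d f *s v f) = - v e + (\<Sum>f\<in>S. c f *s v f)"
  proof -
    have "(\<Sum>f\<in>S. ?d f *s v f) = (\<Sum>f\<in>S. c f *s v f)" using assms(2) by (intro sum.cong) auto
    then show ?thesis using assms(1,2) by (simp add: vector_sneg_minus1[symmetric])
  qed
  also have "\<dots> = 0" using c by simp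
  finally have "(\<Sum>f\<in>insert e S. ?d f *s v f) = 0" .
  moreover have "\<exists>f\<in>insert e S. ?d f \<noteq> 0" by auto
  ultimately show ?thesis unfolding clin_dependent_def by blast
qed


lemma dep_insert_cases:
  assumes "finite S" "e \<notin> S" "clin_dependent (insert e S) v"
  shows "clin_dependent S v \<or> v e \<in> cspan_fam S v"
proof (rule ccontr)
  assume "\<not> (clin_dependent S v \<or> v e \<in> cspan_fam S v)"
  then show False using indep_insert[OF assms(1,2), of v] assms(3) by simp
qed

lemma span_card:
  fixes v :: "'a \<Rightarrow> complex^'n"
  assumes "finite S" "cspan_fam S v = UNIV"
  shows "CARD('n) \<le> card S"
proof -
  have "UNIV \<subseteq> vec.span (v ` S)" using assms(2) cspan_eq[OF assms(1), of v] by simp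
  then have "vec.dim (UNIV :: (complex^'n) set) \<le> card (v ` S)"
    using vec.dim_le_card assms(1) by blast
  also have "\<dots> \<le> card S" using assms(1) card_image_le by blast
  finally show ?thesis using vec_dim_card[where 'a=complex and 'n='n] by linarith
qed

lemma span_indep:
  fixes v :: "nat \<Rightarrow> complex^'n"
  assumes "finite S" "\<not> clin_dependent S v" "card S = CARD('n)"
  shows "cspan_fam S v = UNIV"
proof -
  have "x \<in> cspan_fam S v" for x
  proof -
    obtain i where i: "i \<notin> S" using fresh_nat assms(1) by blast
    have "card (insert i S) = Suc (card S)" using assms(1) i by simp
    then have "clin_dependent (insert i S) (v(i := x))"
      using assms(1,3) by (intro clin_dep_card) auto
    then have "clin_dependent S (v(i := x)) \<or> (v(i := x)) i \<in> cspan_fam S (v(i := x))"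
      by (rule dep_insert_cases[OF assms(1) i])
    moreover have "clin_dependent S (v(i := x)) = clin_dependent S v"
      using i by (intro clin_dep_cong) auto
    moreover have "cspan_fam S (v(i := x)) = cspan_fam S v"
      using i by (intro cspan_cong) auto
    ultimately show ?thesis using assms(2) by simp
  qed
  then show ?thesis by blast
qed

lemma scaleR_vec_eq: "(c::real) *\<^sub>R (x::complex^'n) = (complex_of_real c) *s x"
proof (rule vec_eq_iff[THEN iffD2], rule allI)
  fix i
  have "(c *\<^sub>R x) $ i = c *\<^sub>R (x $ i)" by simp
  also have "\<dots> = complex_of_real c * x $ i" by (rule scaleR_conv_of_real)
  finally show "(c *\<^sub>R x) $ i = (complex_of_real c *s x) $ i" by simp
qed

lemma normal_exists:
  fixes U :: "(complex^'n) set"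
  assumes "vec.subspace U" "U \<noteq> UNIV"
  shows "\<exists>a. a \<noteq> 0 \<and> (\<forall>x\<in>U. dotc a x = 0)"
proof -
  have sub: "subspace U"
    using assms(1) unfolding vec.subspace_def subspace_def by (simp add: scaleR_vec_eq)
  have "dim U \<noteq> DIM(complex^'n)"
  proof
    assume "dim U = DIM(complex^'n)"
    then have "span U = UNIV" using dim_eq_full by blast
    then have "U = UNIV" using sub span_eq_iff[of U] by simp
    then show False using assms(2) by simp
  qed
  then have "dim U < DIM(complex^'n)" using dim_subset_UNIV[of U] by linarith
  then obtain y :: "complex^'n" where y: "y \<noteq> 0" "\<And>z. z \<in> span U \<Longrightarrow> orthogonal y z"
    using orthogonal_to_subspace_exists by blast
  have yo: "y \<bullet> z = 0" if "z \<in> U" for z using y(2)[of z] that span_base[of z U]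
    unfolding orthogonal_def by blast
  define a where "a = (\<chi> i. cnj (y $ i))"
  have "a \<noteq> 0"
  proof
    assume "a = 0"
    then have "a $ i = 0" for i by simp
    then have "y $ i = 0" for i unfolding a_def by simp
    then show False using y(1) by (simp add: vec_eq_iff)
  qed
  moreover have "dotc a x = 0" if "x \<in> U" for x
  proof -
    have ix: "\<i> *s x \<in> U" using assms(1) that unfolding vec.subspace_def by blast
    have "Re (dotc a x) = y \<bullet> x"
      unfolding dotc_def inner_vec_def Re_sum a_def
      by (rule sum.cong) (auto simp: inner_complex_def)
    moreover have "Im (dotc a x) = - (y \<bullet> (\<i> *s x))"
      unfolding dotc_def inner_vec_def Im_sum a_def
      by (simp add: inner_complex_def sum_negf[symmetric] algebra_simps)
    ultimately show ?thesis using yo[OF that] yo[OF ix] by (simp add: complex_eq_iff)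
  qed
  ultimately show ?thesis by blast
qed

lemma cspan_subspace: "finite S \<Longrightarrow> vec.subspace (cspan_fam S v)"
  by (simp add: cspan_eq vec.subspace_span)

lemma cspan_in_hyp:
  assumes "finite S" "\<And>e. e \<in> S \<Longrightarrow> dotc a (v e) = 0" "x \<in> cspan_fam S v"
  shows "dotc a x = 0"
proof -
  obtain c where "x = (\<Sum>e\<in>S. c e *s v e)" using assms(3) unfolding cspan_fam_def by blast
  then show ?thesis using assms(2) by (simp add: dotc_sum)
qed

lemma span_from_N:
  assumes "finite S" "\<not> (\<exists>H'. chyperplane H' \<and> (\<forall>e\<in>S. v e \<in> H'))"
  shows "cspan_fam S v = UNIV"
proof (rule ccontr)
  assume "cspan_fam S v \<noteq> UNIV"
  then obtain a where a: "a \<noteq> 0" "\<forall>x\<in>cspan_fam S v. dotc a x = 0"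
    using normal_exists cspan_subspace[OF assms(1)] by blast
  have "chyperplane {x. dotc a x = 0}" using a(1) hyperplane_ex by blast
  moreover have "\<forall>e\<in>S. v e \<in> {x. dotc a x = 0}" using a(2) cspan_base[OF assms(1)] by blast
  ultimately show False using assms(2) by blast
qed

lemma N_from_span:
  assumes "finite S" "cspan_fam S v = UNIV"
  shows "\<not> (\<exists>H'. chyperplane H' \<and> (\<forall>e\<in>S. v e \<in> H'))"
proof
  assume "\<exists>H'. chyperplane H' \<and> (\<forall>e\<in>S. v e \<in> H')"
  then obtain a where a: "a \<noteq> 0" "\<forall>e\<in>S. dotc a (v e) = 0"
    unfolding hyperplane_ex by auto
  obtain x where "dotc a x \<noteq> 0" using dotc_nonzero_ex a(1) by blast
  moreover have "x \<in> cspan_fam S v" using assms(2) by simp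
  ultimately show False using cspan_in_hyp[OF assms(1)] a(2) by blast
qed

lemma decomp_hyp:
  assumes "dotc a q \<noteq> 0"
  shows "dotc a (x - (dotc a x / dotc a q) *s q) = 0"
  using assms by simp

lemma lift_sum:
  fixes c z :: "'a \<Rightarrow> complex" and g :: "'a \<Rightarrow> complex^'n"
  shows "(\<Sum>e\<in>S. c e *s (g e + z e *s q)) = (\<Sum>e\<in>S. c e *s g e) + (\<Sum>e\<in>S. c e * z e) *s q"
proof -
  have "(\<Sum>e\<in>S. c e *s (g e + z e *s q)) = (\<Sum>e\<in>S. c e *s g e + (c e * z e) *s q)"
    by (rule sum.cong) (simp_all add: vector_add_ldistrib vector_smult_assoc)
  also have "\<dots> = (\<Sum>e\<in>S. c e *s g e) + (\<Sum>e\<in>S. (c e * z e) *s q)"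
    by (rule sum.distrib)
  also have "(\<Sum>e\<in>S. (c e * z e) *s q) = (\<Sum>e\<in>S. c e * z e) *s q"
    by (rule vec.scale_sum_left[symmetric])
  finally show ?thesis .
qed

lemma liftdep:
  assumes "dotc a q \<noteq> 0" "\<And>e. e \<in> S \<Longrightarrow> dotc a (g e) = 0"
  shows "(\<Sum>e\<in>S. c e *s (g e + z e *s q)) = 0 \<longleftrightarrow>
         ((\<Sum>e\<in>S. c e *s g e) = 0 \<and> (\<Sum>e\<in>S. c e * z e) = 0)"
proof
  assume h: "(\<Sum>e\<in>S. c e *s (g e + z e *s q)) = 0"
  have d: "dotc a (\<Sum>e\<in>S. c e *s g e) = 0" using assms(2) by (simp add: dotc_sum)
  have "dotc a ((\<Sum>e\<in>S. c e *s g e) + (\<Sum>e\<in>S. c e * z e) *s q) = 0"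
    using h lift_sum[of c g z q S] by simp
  then have "(\<Sum>e\<in>S. c e * z e) * dotc a q = 0" using d by simp
  then have z: "(\<Sum>e\<in>S. c e * z e) = 0" using assms(1) by simp
  then show "(\<Sum>e\<in>S. c e *s g e) = 0 \<and> (\<Sum>e\<in>S. c e * z e) = 0"
    using h lift_sum[of c g z q S] by simp
next
  assume "(\<Sum>e\<in>S. c e *s g e) = 0 \<and> (\<Sum>e\<in>S. c e * z e) = 0"
  then show "(\<Sum>e\<in>S. c e *s (g e + z e *s q)) = 0" using lift_sum[of c g z q S] by simp
qed

lemma perp_all:
  assumes "dotc a q \<noteq> 0" "dotc b q = 0" "\<And>x. dotc a x = 0 \<Longrightarrow> dotc b x = 0"
  shows "b = 0"
proof -
  have "dotc b x = 0" for x
  proof -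
    let ?t = "dotc a x / dotc a q"
    have "dotc b (x - ?t *s q) = 0" using assms(3) decomp_hyp[OF assms(1)] by blast
    then show ?thesis using assms(2) by simp
  qed
  then have "b $ i = 0" for i using dotc_axis[of b i] by simp
  then show ?thesis by (simp add: vec_eq_iff)
qed

lemma indep_spans_hyp:
  fixes v :: "nat \<Rightarrow> complex^'n"
  assumes "dotc a q \<noteq> 0" "finite T" "\<not> clin_dependent T v" "card T + 1 = CARD('n)"
    "\<And>e. e \<in> T \<Longrightarrow> dotc a (v e) = 0" "dotc a h = 0"
  shows "h \<in> cspan_fam T v"
proof -
  obtain i where i: "i \<notin> T" using fresh_nat assms(2) by blast
  have qn: "q \<notin> cspan_fam T v" using cspan_in_hyp[OF assms(2), of a v q] assms(5) assms(1) by blast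
  have e1: "clin_dependent T (v(i := q)) = clin_dependent T v"
    using i by (intro clin_dep_cong) auto
  have e2: "cspan_fam T (v(i := q)) = cspan_fam T v"
    using i by (intro cspan_cong) auto
  have "\<not> clin_dependent (insert i T) (v(i := q))"
    using indep_insert[OF assms(2) i, of "v(i := q)"] e1 e2 qn assms(3) by simp
  then have "cspan_fam (insert i T) (v(i := q)) = UNIV"
    using span_indep[of "insert i T" "v(i := q)"] assms(2,4) i by simp
  then obtain c where c: "h = (\<Sum>e\<in>insert i T. c e *s (v(i := q)) e)"
    unfolding cspan_fam_def by blast
  then have h: "h = c i *s q + (\<Sum>e\<in>T. c e *s v e)" using sum_insert_upd[OF assms(2) i] by simp
  have "dotc a (\<Sum>e\<in>T. c e *s v e) = 0" using assms(5) by (simp add: dotc_sum)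
  then have "c i * dotc a q = 0" using h assms(6) by simp
  then have "c i = 0" using assms(1) by simp
  then show ?thesis using h cspan_sum[OF assms(2)] by simp
qed

lemma exists_outside:
  fixes v :: "nat \<Rightarrow> complex^'n"
  assumes "dotc a q \<noteq> 0" "finite T" "card T + 1 < CARD('n)"
  shows "\<exists>w. dotc a w = 0 \<and> w \<notin> cspan_fam T v"
proof (rule ccontr)
  assume "\<not> ?thesis"
  then have hin: "\<And>w. dotc a w = 0 \<Longrightarrow> w \<in> cspan_fam T v" by blast
  obtain i where i: "i \<notin> T" using fresh_nat assms(2) by blast
  have "x \<in> cspan_fam (insert i T) (v(i := q))" for x
  proof -
    let ?t = "dotc a x / dotc a q"
    obtain c where c: "x - ?t *s q = (\<Sum>e\<in>T. c e *s v e)"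
      using hin[OF decomp_hyp[OF assms(1)]] unfolding cspan_fam_def by blast
    have "x = (\<Sum>e\<in>insert i T. (c(i := ?t)) e *s (v(i := q)) e)"
    proof -
      have "(\<Sum>e\<in>T. (c(i := ?t)) e *s v e) = (\<Sum>e\<in>T. c e *s v e)"
        using i by (intro sum.cong) auto
      then have "(\<Sum>e\<in>insert i T. (c(i := ?t)) e *s (v(i := q)) e) = ?t *s q + (\<Sum>e\<in>T. c e *s v e)"
        using sum_insert_upd[OF assms(2) i, of "c(i := ?t)" v q] by simp
      then show ?thesis using c by (simp add: algebra_simps)
    qed
    then show ?thesis by (rule cspan_memI)
  qed
  then have "cspan_fam (insert i T) (v(i := q)) = UNIV" by blast
  then have "CARD('n) \<le> card (insert i T)" using span_card assms(2) by blast
  then show False using assms(2,3) i by simp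
qed


lemma matroid_finite: "matroid E indep \<Longrightarrow> finite E"
  unfolding matroid_def by blast
lemma matroid_sub: "matroid E indep \<Longrightarrow> indep X \<Longrightarrow> X \<subseteq> E"
  unfolding matroid_def by blast
lemma matroid_empty: "matroid E indep \<Longrightarrow> indep {}"
  unfolding matroid_def by blast

lemma dep_card:
  assumes M: "matroid E indep" and P: "paving n E indep" and S: "S \<subseteq> E" "\<not> indep S"
  shows "n \<le> card S \<and> (card S = n \<longrightarrow> circuit E indep S)"
proof -
  have fE: "finite E" using matroid_finite[OF M] .
  have fS: "finite S" using S(1) fE rev_finite_subset by blast
  let ?P = "\<lambda>C. C \<subseteq> S \<and> \<not> indep C"
  obtain C where C: "?P C" "\<And>C'. ?P C' \<Longrightarrow> card C \<le> card C'"
    using ex_has_least_nat[of ?P S card] S by blast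
  have fC: "finite C" using C(1) fS rev_finite_subset by blast
  have circ: "circuit E indep C"
    unfolding circuit_def
  proof (intro conjI ballI)
    show "C \<subseteq> E" using C(1) S(1) by blast
    show "\<not> indep C" using C(1) by blast
  next
    fix x assume x: "x \<in> C"
    show "indep (C - {x})"
    proof (rule ccontr)
      assume "\<not> indep (C - {x})"
      then have "?P (C - {x})" using C(1) by blast
      then have "card C \<le> card (C - {x})" using C(2) by blast
      moreover have "card (C - {x}) < card C" by (rule card_Diff1_less[OF fC x])
      ultimately show False by simp
    qed
  qed
  then have cc: "card C = n \<or> card C = n + 1" using P unfolding paving_def by blast
  have le: "card C \<le> card S" using C(1) fS card_mono by blast
  show ?thesis
  proof
    show "n \<le> card S" using cc le by linarith
    show "card S = n \<longrightarrow> circuit E indep S"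
    proof
      assume "card S = n"
      then have "card C = card S" using cc le by linarith
      then have "C = S" using card_subset_eq[OF fS] C(1) by blast
      then show "circuit E indep S" using circ by simp
    qed
  qed
qed

lemma rank_indep:
  assumes M: "matroid E indep" and P: "paving n E indep"
  shows "\<exists>I. indep I \<and> card I = n"
proof -
  let ?A = "{card I | I. indep I}"
  have "?A \<subseteq> card ` Pow E" using matroid_sub[OF M] by blast
  then have "finite ?A" using matroid_finite[OF M] finite_subset by blast
  moreover have "?A \<noteq> {}" using matroid_empty[OF M] by blast
  ultimately have "Max ?A \<in> ?A" by (rule Max_in)
  moreover have "Max ?A = n" using P unfolding paving_def mrank_def by simp
  ultimately show ?thesis by auto
qed

lemma indep_card_le:
  assumes M: "matroid E indep" and P: "paving n E indep" and I: "indep I"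
  shows "card I \<le> n"
proof -
  let ?A = "{card I | I. indep I}"
  have "?A \<subseteq> card ` Pow E" using matroid_sub[OF M] by blast
  then have "finite ?A" using matroid_finite[OF M] finite_subset by blast
  moreover have "card I \<in> ?A" using I by blast
  ultimately have "card I \<le> Max ?A" by (rule Max_ge)
  moreover have "Max ?A = n" using P unfolding paving_def mrank_def by simp
  ultimately show ?thesis by simp
qed

lemma hyp_through_circuit:
  assumes M: "matroid E indep" and C: "circuit E indep C" "card C = n"
  shows "\<exists>S. dep_hyperplane n E indep S \<and> C \<subseteq> S"
proof -
  have fE: "finite E" using matroid_finite[OF M] .
  have CE: "C \<subseteq> E" using C(1) unfolding circuit_def by blast
  have fC: "finite C" using CE fE rev_finite_subset by blast
  let ?P = "\<lambda>S. hyp_candidate n E indep S \<and> C \<subseteq> S"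
  have PC: "?P C"
    unfolding hyp_candidate_def
  proof (intro conjI allI impI)
    show "C \<subseteq> E" by (rule CE)
    show "n \<le> card C" using C(2) by simp
    show "C \<subseteq> C" by simp
  next
    fix T assume T: "T \<subseteq> C \<and> card T = n"
    then have "T = C" using card_subset_eq[OF fC, of T] C(2) by simp
    then show "circuit E indep T" using C(1) by simp
  qed
  have bound: "\<forall>S. ?P S \<longrightarrow> card S < card E + 1"
  proof (intro allI impI)
    fix S assume "?P S"
    then have "S \<subseteq> E" unfolding hyp_candidate_def by blast
    then show "card S < card E + 1" using card_mono[OF fE, of S] by simp
  qed
  from ex_has_greatest_nat[of ?P C card "card E + 1", OF PC bound]
  obtain S where S: "?P S" "\<And>S'. ?P S' \<Longrightarrow> card S' \<le> card S"
    by auto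
  have "dep_hyperplane n E indep S"
    unfolding dep_hyperplane_def
  proof (intro conjI allI impI)
    show "hyp_candidate n E indep S" using S(1) by blast
  next
    fix S' assume S': "hyp_candidate n E indep S' \<and> S \<subseteq> S'"
    then have "?P S'" using S(1) by (meson order_trans)
    then have le: "card S' \<le> card S" using S(2) by blast
    have "S' \<subseteq> E" using S' unfolding hyp_candidate_def by blast
    then have fS': "finite S'" using fE rev_finite_subset by blast
    have "card S \<le> card S'" using S' card_mono[OF fS'] by blast
    then have "card S = card S'" using le by simp
    then show "S' = S" using card_subset_eq[OF fS', of S] S' by simp
  qed
  then show ?thesis using S(1) by blast
qed

lemma hyp_set_finite:
  assumes M: "matroid E indep"
  shows "finite {S. dep_hyperplane n E indep S \<and> p \<in> S}"
proof -
  have "{S. dep_hyperplane n E indep S \<and> p \<in> S} \<subseteq> Pow E"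
    unfolding dep_hyperplane_def hyp_candidate_def by blast
  then show ?thesis using matroid_finite[OF M] finite_subset by blast
qed

lemma deg_le1_unique:
  assumes M: "matroid E indep" and d: "mdeg n E indep p \<le> 1"
    and S1: "dep_hyperplane n E indep S1" "p \<in> S1"
    and S2: "dep_hyperplane n E indep S2" "p \<in> S2"
  shows "S1 = S2"
proof -
  let ?A = "{S. dep_hyperplane n E indep S \<and> p \<in> S}"
  have "card ?A \<le> Suc 0" using d unfolding mdeg_def by simp
  then have "\<forall>a\<in>?A. \<forall>b\<in>?A. a = b" using card_le_Suc0_iff_eq[OF hyp_set_finite[OF M]] by blast
  then show ?thesis using S1 S2 by blast
qed

lemma deg_ge1_ex:
  assumes d: "mdeg n E indep p \<ge> 1"
  shows "\<exists>S. dep_hyperplane n E indep S \<and> p \<in> S"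
proof (rule ccontr)
  assume "\<not> ?thesis"
  then have e: "{S. dep_hyperplane n E indep S \<and> p \<in> S} = {}" by blast
  have "mdeg n E indep p = 0" unfolding mdeg_def e by simp
  then show False using d by simp
qed

lemma hyp_complement:
  assumes M: "matroid E indep" and P: "paving n E indep" and S0: "dep_hyperplane n E indep S0"
  shows "\<exists>x\<in>E. x \<notin> S0"
proof (rule ccontr)
  assume "\<not> ?thesis"
  then have ES: "E \<subseteq> S0" by blast
  obtain I where I: "indep I" "card I = n" using rank_indep[OF M P] by blast
  have "I \<subseteq> S0" using matroid_sub[OF M I(1)] ES by blast
  then have "circuit E indep I" using S0 I(2) unfolding dep_hyperplane_def hyp_candidate_def by blast
  then show False using I(1) unfolding circuit_def by blast
qed

lemma card_ground:
  assumes M: "matroid E indep" and P: "paving n E indep"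
  shows "n \<le> card E"
proof -
  obtain I where I: "indep I" "card I = n" using rank_indep[OF M P] by blast
  then show ?thesis using matroid_sub[OF M I(1)] card_mono[OF matroid_finite[OF M]] by blast
qed

lemma dep_delete: "dependent_set (E - {p}) (mdelete indep p) S \<longleftrightarrow> S \<subseteq> E - {p} \<and> \<not> indep S"
  unfolding dependent_set_def mdelete_def by blast


lemma cspan_add: "finite S \<Longrightarrow> x \<in> cspan_fam S v \<Longrightarrow> y \<in> cspan_fam S v \<Longrightarrow> x + y \<in> cspan_fam S v"
  by (simp add: cspan_eq vec.span_add)
lemma cspan_diff: "finite S \<Longrightarrow> x \<in> cspan_fam S v \<Longrightarrow> y \<in> cspan_fam S v \<Longrightarrow> x - y \<in> cspan_fam S v"
  by (simp add: cspan_eq vec.span_diff)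
lemma cspan_scale: "finite S \<Longrightarrow> x \<in> cspan_fam S v \<Longrightarrow> c *s x \<in> cspan_fam S v"
  by (simp add: cspan_eq vec.span_scale)

lemma cspan_sub:
  assumes "finite S" "finite T" "\<And>e. e \<in> S \<Longrightarrow> v e \<in> cspan_fam T w"
  shows "cspan_fam S v \<subseteq> cspan_fam T w"
proof -
  have "v ` S \<subseteq> vec.span (w ` T)" using assms(3) cspan_eq[OF assms(2), of w] by auto
  then have "vec.span (v ` S) \<subseteq> vec.span (w ` T)"
    using vec.span_minimal[of "v ` S" "vec.span (w ` T)"] vec.subspace_span by blast
  then show ?thesis using cspan_eq[OF assms(1), of v] cspan_eq[OF assms(2), of w] by simp
qed

lemma rel_elem:
  assumes "finite T" "e1 \<in> T" "c e1 \<noteq> 0" "(\<Sum>e\<in>T. c e *s v e) = 0"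
  shows "v e1 \<in> cspan_fam (T - {e1}) v"
proof -
  have fT: "finite (T - {e1})" using assms(1) by simp
  have "(\<Sum>e\<in>T. c e *s v e) = c e1 *s v e1 + (\<Sum>e\<in>T - {e1}. c e *s v e)"
    using sum.remove[OF assms(1,2)] by simp
  then have eq: "c e1 *s v e1 = - (\<Sum>e\<in>T - {e1}. c e *s v e)" using assms(4)
    by (simp add: eq_neg_iff_add_eq_0)
  then have "(1 / c e1) *s (c e1 *s v e1) = (1 / c e1) *s (- (\<Sum>e\<in>T - {e1}. c e *s v e))" by simp
  then have "v e1 = (1 / c e1) *s (- (\<Sum>e\<in>T - {e1}. c e *s v e))"
    using assms(3) by (simp add: vector_smult_assoc)
  also have "\<dots> = (\<Sum>e\<in>T - {e1}. (- c e / c e1) *s v e)"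
    by (simp add: vec.scale_sum_right vector_smult_assoc sum_negf[symmetric] vec.scale_minus_right)
  finally show ?thesis using cspan_sum[OF fT, of "\<lambda>e. - c e / c e1" v] by simp
qed

lemma dep_rel_elem:
  assumes "finite T" "clin_dependent T v"
  shows "\<exists>e1\<in>T. v e1 \<in> cspan_fam (T - {e1}) v"
proof -
  obtain c e1 where "e1 \<in> T" "c e1 \<noteq> 0" "(\<Sum>e\<in>T. c e *s v e) = 0"
    using assms(2) unfolding clin_dependent_def by blast
  then show ?thesis using rel_elem[OF assms(1)] by blast
qed

lemma dep_in_W:
  fixes v :: "nat \<Rightarrow> complex^'n"
  assumes "b \<noteq> 0" "dotc b q = 0" "dotc a q \<noteq> 0" "finite T"
    "\<And>e. e \<in> T \<Longrightarrow> dotc b (v e) = 0" "\<And>e. e \<in> T \<Longrightarrow> dotc a (v e) = 0"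
    "CARD('n) \<le> card T + 1"
  shows "clin_dependent T v"
proof -
  obtain i where i: "i \<notin> T" using fresh_nat assms(4) by blast
  have "clin_dependent (insert i T) (v(i := q))"
    by (rule clin_dep_hyp[OF assms(1)]) (use assms i in auto)
  then obtain c e0 where c: "e0 \<in> insert i T" "c e0 \<noteq> 0"
    "(\<Sum>e\<in>insert i T. c e *s (v(i := q)) e) = 0"
    unfolding clin_dependent_def by blast
  then have eq: "c i *s q + (\<Sum>e\<in>T. c e *s v e) = 0" using sum_insert_upd[OF assms(4) i, of c v q] by simp
  have "dotc a (\<Sum>e\<in>T. c e *s v e) = 0" using assms(6) by (simp add: dotc_sum)
  then have "dotc a (c i *s q + (\<Sum>e\<in>T. c e *s v e)) = c i * dotc a q" by simp
  then have "c i = 0" using eq assms(3) by simp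
  then have "e0 \<in> T" "(\<Sum>e\<in>T. c e *s v e) = 0" using c eq by auto
  then show ?thesis unfolding clin_dependent_def using c(2) by blast
qed

lemma lift_goal:
  fixes v :: "nat \<Rightarrow> complex^'n"
  assumes "finite E" "\<And>S. S \<subseteq> E \<Longrightarrow> \<not> indep S \<Longrightarrow> clin_dependent S v"
    "cspan_fam E v = UNIV"
  shows "v \<in> circuit_variety TYPE('n) E indep \<and> \<not> (\<exists>H'. chyperplane H' \<and> (\<forall>e\<in>E. v e \<in> H'))"
  using assms N_from_span[OF assms(1,3)] unfolding circuit_variety_def dependent_set_def by blast

lemma V_reduce:
  fixes v :: "nat \<Rightarrow> complex^'n"
  assumes M: "matroid E indep" and P: "paving CARD('n) E indep"
    and A1: "\<And>S. S \<subseteq> E - {p} \<Longrightarrow> \<not> indep S \<Longrightarrow> clin_dependent S v"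
    and A2: "\<And>C. circuit E indep C \<Longrightarrow> card C = CARD('n) \<Longrightarrow> p \<in> C \<Longrightarrow> clin_dependent C v"
    and S: "S \<subseteq> E" "\<not> indep S"
  shows "clin_dependent S v"
proof (cases "p \<in> S")
  case False
  then show ?thesis using A1 S by blast
next
  case True
  have fS: "finite S" using S(1) matroid_finite[OF M] rev_finite_subset by blast
  have dc: "CARD('n) \<le> card S \<and> (card S = CARD('n) \<longrightarrow> circuit E indep S)"
    using dep_card[OF M P S] .
  show ?thesis
  proof (cases "card S = CARD('n)")
    case True
    then show ?thesis using dc A2 \<open>p \<in> S\<close> by blast
  next
    case False
    then show ?thesis using dc clin_dep_card[OF fS, where v=v] by simp
  qed
qed

lemma span_ind:
  fixes g :: "nat \<Rightarrow> complex^'n"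
  assumes fE: "finite E" and e1: "e1 \<in> E" and g1: "g e1 \<in> cspan_fam (E - {e1}) g"
    and H: "\<And>x. dotc a x = 0 \<Longrightarrow> x \<in> cspan_fam E g" and aq: "dotc a q \<noteq> 0"
  shows "cspan_fam E (\<lambda>e. g e + (if e = e1 then 1 else 0) *s q) = UNIV"
proof -
  let ?L = "\<lambda>e. g e + (if e = e1 then 1 else 0) *s q"
  have fE1: "finite (E - {e1})" using fE by simp
  have c1: "cspan_fam (E - {e1}) g = cspan_fam (E - {e1}) ?L" by (rule cspan_cong) auto
  have "cspan_fam (E - {e1}) ?L \<subseteq> cspan_fam E ?L" using cspan_mono[OF fE] by blast
  then have ge1: "g e1 \<in> cspan_fam E ?L" using g1 c1 by blast
  have ge: "g e \<in> cspan_fam E ?L" if "e \<in> E" for e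
  proof (cases "e = e1")
    case True then show ?thesis using ge1 by simp
  next
    case False
    have "?L e \<in> cspan_fam E ?L" by (rule cspan_base[OF fE that])
    then show ?thesis using False by simp
  qed
  then have sub: "cspan_fam E g \<subseteq> cspan_fam E ?L" using cspan_sub[OF fE fE] by blast
  have "q = ?L e1 - g e1" by simp
  then have qin: "q \<in> cspan_fam E ?L" using cspan_diff[OF fE cspan_base[OF fE e1] ge1] by simp
  have "x \<in> cspan_fam E ?L" for x
  proof -
    let ?t = "dotc a x / dotc a q"
    have "x - ?t *s q \<in> cspan_fam E ?L" using H[OF decomp_hyp[OF aq]] sub by blast
    moreover have "?t *s q \<in> cspan_fam E ?L" using cspan_scale[OF fE qin] .
    ultimately have "(x - ?t *s q) + ?t *s q \<in> cspan_fam E ?L" using cspan_add[OF fE] by blast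
    then show ?thesis by simp
  qed
  then show ?thesis by blast
qed


lemma dotc_zero_left[simp]: "dotc 0 x = 0"
  by (simp add: dotc_def)

lemma caseA_b:
  fixes g :: "nat \<Rightarrow> complex^'n"
  assumes fE: "finite E" and pE: "p \<in> E"
    and H: "cspan_fam E g = {x. dotc a x = 0}" and aq: "dotc a q \<noteq> 0"
    and A: "cspan_fam (E - {p}) g \<noteq> {x. dotc a x = 0}"
  shows "\<exists>b. b \<noteq> 0 \<and> dotc b q = 0 \<and> (\<forall>e\<in>E - {p}. dotc b (g e) = 0)"
proof -
  let ?E' = "E - {p}"
  have fE': "finite ?E'" using fE by simp
  have Wsub: "cspan_fam ?E' g \<subseteq> {x. dotc a x = 0}" using cspan_mono[OF fE, of ?E' g] H by auto
  then obtain h where h: "dotc a h = 0" "h \<notin> cspan_fam ?E' g" using A by blast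
  let ?U = "vec.span (insert q (g ` ?E'))"
  have "h \<notin> ?U"
  proof
    assume "h \<in> ?U"
    then obtain k where k: "h - k *s q \<in> vec.span (g ` ?E')" using vec.span_insert by blast
    then have "h - k *s q \<in> cspan_fam ?E' g" using cspan_eq[OF fE', of g] by simp
    then have "dotc a (h - k *s q) = 0" using Wsub by blast
    then have "k = 0" using h(1) aq by simp
    then show False using k h(2) cspan_eq[OF fE', of g] by simp
  qed
  then have "?U \<noteq> UNIV" by blast
  then obtain b where b: "b \<noteq> 0" "\<forall>x\<in>?U. dotc b x = 0"
    using normal_exists[OF vec.subspace_span] by blast
  have "dotc b q = 0" using b(2) vec.span_base[of q "insert q (g ` ?E')"] by blast
  moreover have "\<forall>e\<in>?E'. dotc b (g e) = 0"
    using b(2) vec.span_base[of _ "insert q (g ` ?E')"] by blast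
  ultimately show ?thesis using b(1) by blast
qed

lemma caseA:
  fixes g :: "nat \<Rightarrow> complex^'n" and indep :: "nat set \<Rightarrow> bool"
  assumes M: "matroid E indep" and P: "paving CARD('n) E indep" and pE: "p \<in> E"
    and d: "mdeg CARD('n) E indep p \<le> 1"
    and H: "cspan_fam E g = {x. dotc a x = 0}" and aq: "dotc a q \<noteq> 0"
    and A: "cspan_fam (E - {p}) g \<noteq> {x. dotc a x = 0}"
  shows "\<exists>z. (\<lambda>e. g e + z e *s q) \<in> circuit_variety TYPE('n) E indep \<and>
             \<not> (\<exists>H'. chyperplane H' \<and> (\<forall>e\<in>E. g e + z e *s q \<in> H'))"
proof -
  let ?E' = "E - {p}"
  let ?n = "CARD('n)"
  have fE: "finite E" using matroid_finite[OF M] .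
  have fE': "finite ?E'" using fE by simp
  have gH: "dotc a (g e) = 0" if "e \<in> E" for e using cspan_base[OF fE that, of g] H by blast
  obtain b where b: "b \<noteq> 0" "dotc b q = 0" "\<forall>e\<in>?E'. dotc b (g e) = 0"
    using caseA_b[OF fE pE H aq A] by blast
  have DW: "clin_dependent T g" if "T \<subseteq> ?E'" "?n \<le> card T + 1" for T
  proof -
    have "finite T" using that(1) fE' rev_finite_subset by blast
    then show ?thesis using dep_in_W[OF b(1) b(2) aq] that b(3) gH by blast
  qed
  have cardE': "?n \<le> card ?E' + 1" using card_ground[OF M P] pE fE by simp
  let ?L = "\<lambda>e1 e. g e + (if e = e1 then 1 else 0) *s q"
  have generic: "\<exists>z. (\<lambda>e. g e + z e *s q) \<in> circuit_variety TYPE('n) E indep \<and>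
             \<not> (\<exists>H'. chyperplane H' \<and> (\<forall>e\<in>E. g e + z e *s q \<in> H'))"
    if e1: "e1 \<in> ?E'" "g e1 \<in> cspan_fam (?E' - {e1}) g"
      and circ: "\<And>C. circuit E indep C \<Longrightarrow> card C = ?n \<Longrightarrow> p \<in> C \<Longrightarrow> clin_dependent C (?L e1)"
    for e1
  proof -
    have sp: "cspan_fam E (?L e1) = UNIV"
    proof (rule span_ind[OF fE _ _ _ aq])
      show "e1 \<in> E" using e1 by blast
      show "g e1 \<in> cspan_fam (E - {e1}) g"
        using e1(2) cspan_mono[OF _, of "E - {e1}" "?E' - {e1}" g] fE by auto
      show "\<And>x. dotc a x = 0 \<Longrightarrow> x \<in> cspan_fam E g" using H by blast
    qed
    have a1: "clin_dependent S (?L e1)" if S: "S \<subseteq> ?E'" "\<not> indep S" for S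
    proof (rule clin_dep_hyp[OF b(1)])
      show "finite S" using S(1) fE' rev_finite_subset by blast
      have "S \<subseteq> E" using S(1) by blast
      then show "?n \<le> card S" using dep_card[OF M P _ S(2)] by blast
      show "\<And>e. e \<in> S \<Longrightarrow> dotc b (?L e1 e) = 0" using S(1) b by auto
    qed
    have "(?L e1) \<in> circuit_variety TYPE('n) E indep \<and>
             \<not> (\<exists>H'. chyperplane H' \<and> (\<forall>e\<in>E. ?L e1 e \<in> H'))"
      by (rule lift_goal[OF fE _ sp]) (rule V_reduce[OF M P a1 circ], auto)
    then show ?thesis by (rule exI[where x="\<lambda>e. if e = e1 then 1 else 0"])
  qed
  obtain e0 where e0: "e0 \<in> ?E'" "g e0 \<in> cspan_fam (?E' - {e0}) g"
    using dep_rel_elem[OF fE' DW[OF _ cardE']] by blast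
  show ?thesis
  proof (cases "\<exists>S0. dep_hyperplane ?n E indep S0 \<and> p \<in> S0")
    case False
    show ?thesis
    proof (rule generic[OF e0])
      fix C assume C: "circuit E indep C" "card C = ?n" "p \<in> C"
      then obtain S where "dep_hyperplane ?n E indep S" "C \<subseteq> S" using hyp_through_circuit[OF M] by blast
      then show "clin_dependent C (?L e0)" using False C(3) by blast
    qed
  next
    case True
    then obtain S0 where S0: "dep_hyperplane ?n E indep S0" "p \<in> S0" by blast
    have CS0: "C \<subseteq> S0" if CC: "circuit E indep C" "card C = ?n" "p \<in> C" for C
    proof -
      obtain S where S: "dep_hyperplane ?n E indep S" "C \<subseteq> S" using hyp_through_circuit[OF M CC(1,2)] by blast
      then have "S = S0" using deg_le1_unique[OF M d S(1) _ S0] CC(3) by blast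
      then show ?thesis using S by blast
    qed
    have outside: "clin_dependent C (?L e1)"
      if "circuit E indep C" "card C = ?n" "e1 \<notin> C" for C e1
    proof -
      have CE: "C \<subseteq> E" using that(1) unfolding circuit_def by blast
      have "clin_dependent C g"
        by (rule clin_dep_hyp[of a]) (use that CE gH fE rev_finite_subset aq in auto)
      moreover have "clin_dependent C g = clin_dependent C (?L e1)"
        by (rule clin_dep_cong) (use that(3) in auto)
      ultimately show ?thesis by simp
    qed
    show ?thesis
    proof (cases "\<exists>x\<in>E - S0. g x \<in> cspan_fam (?E' - {x}) g")
      case True
      then obtain x where x: "x \<in> E - S0" "g x \<in> cspan_fam (?E' - {x}) g" by blast
      have xE': "x \<in> ?E'" using x(1) S0(2) by blast
      show ?thesis
      proof (rule generic[OF xE' x(2)])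
        fix C assume C: "circuit E indep C" "card C = ?n" "p \<in> C"
        then have "x \<notin> C" using CS0 x(1) by blast
        then show "clin_dependent C (?L x)" using outside C by blast
      qed
    next
      case False
      then have e0S0: "e0 \<in> S0" using e0 by blast
      obtain x where x: "x \<in> E" "x \<notin> S0" using hyp_complement[OF M P S0(1)] by blast
      have xE': "x \<in> ?E'" using x S0(2) by blast
      have xn: "g x \<notin> cspan_fam (?E' - {x}) g" using False x by blast
      show ?thesis
      proof (rule generic[OF e0])
        fix C assume C: "circuit E indep C" "card C = ?n" "p \<in> C"
        show "clin_dependent C (?L e0)"
        proof (cases "e0 \<in> C")
          case False
          then show ?thesis using outside C by blast
        next
          case True
          have CE: "C \<subseteq> E" using C(1) unfolding circuit_def by blast
          have fC: "finite C" using CE fE rev_finite_subset by blast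
          have CS: "C \<subseteq> S0" using CS0 C by blast
          have pe0: "p \<noteq> e0" using e0(1) by blast
          let ?R = "C - {e0} - {p}"
          have fR: "finite ?R" using fC by simp
          have cardR: "card ?R + 2 = ?n"
          proof -
            have "card (C - {e0}) = card C - 1" using True fC by simp
            moreover have "p \<in> C - {e0}" using C(3) pe0 by blast
            ultimately have "card ?R = card C - 1 - 1" using fC by simp
            moreover have "2 \<le> card C"
            proof -
              have "{e0, p} \<subseteq> C" using True C(3) by blast
              then have "card {e0, p} \<le> card C" using card_mono[OF fC] by blast
              then show ?thesis using pe0 by simp
            qed
            ultimately show ?thesis using C(2) by simp
          qed
          have xR: "x \<notin> ?R" using x(2) CS by blast
          let ?T = "insert x ?R"
          have fT: "finite ?T" using fR by simp
          have cardT: "card ?T = card ?R + 1" using fR xR by simp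
          have TE': "?T \<subseteq> ?E'" using xE' CS CE by blast
          have "clin_dependent ?T g" using DW[OF TE'] cardT cardR by simp
          then obtain c e2 where c: "e2 \<in> ?T" "c e2 \<noteq> 0" "(\<Sum>e\<in>?T. c e *s g e) = 0"
            unfolding clin_dependent_def by blast
          have cx: "c x = 0"
          proof (rule ccontr)
            assume "c x \<noteq> 0"
            then have "g x \<in> cspan_fam (?T - {x}) g" using rel_elem[OF fT _ _ c(3)] by blast
            moreover have "?T - {x} \<subseteq> ?E' - {x}" using TE' by blast
            ultimately have "g x \<in> cspan_fam (?E' - {x}) g"
              using cspan_mono[of "?E' - {x}" "?T - {x}" g] fE' by auto
            then show False using xn by blast
          qed
          have "(\<Sum>e\<in>?T. c e *s g e) = c x *s g x + (\<Sum>e\<in>?R. c e *s g e)"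
            using fR xR by simp
          then have sR: "(\<Sum>e\<in>?R. c e *s g e) = 0" using c(3) cx by simp
          have "e2 \<in> ?R" using c(1,2) cx by auto
          then have "clin_dependent ?R g" unfolding clin_dependent_def using c(2) sR by blast
          moreover have "clin_dependent ?R g = clin_dependent ?R (?L e0)"
            by (rule clin_dep_cong) auto
          ultimately have "clin_dependent ?R (?L e0)" by simp
          then show ?thesis using clin_dep_mono[OF fC, of ?R] by blast
        qed
      qed
    qed
  qed
qed


lemma caseB:
  fixes g :: "nat \<Rightarrow> complex^'n" and indep :: "nat set \<Rightarrow> bool"
  assumes M: "matroid E indep" and P: "paving CARD('n) E indep" and pE: "p \<in> E"
    and d: "mdeg CARD('n) E indep p \<le> 1"
    and H: "cspan_fam E g = {x. dotc a x = 0}" and aq: "dotc a q \<noteq> 0"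
    and B: "cspan_fam (E - {p}) g = {x. dotc a x = 0}"
    and L': "liftable TYPE('n) (E - {p}) (mdelete indep p)"
  shows "\<exists>z. (\<lambda>e. g e + z e *s q) \<in> circuit_variety TYPE('n) E indep \<and>
             \<not> (\<exists>H'. chyperplane H' \<and> (\<forall>e\<in>E. g e + z e *s q \<in> H'))"
proof -
  let ?E' = "E - {p}"
  let ?n = "CARD('n)"
  have fE: "finite E" using matroid_finite[OF M] .
  have fE': "finite ?E'" using fE by simp
  have a0: "a \<noteq> 0" using aq by auto
  have gH: "dotc a (g e) = 0" if "e \<in> E" for e using cspan_base[OF fE that, of g] H by blast
  have hyp: "chyperplane {x. dotc a x = 0}" using a0 hyperplane_ex by blast
  have qH: "q \<notin> {x. dotc a x = 0}" using aq by simp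
  obtain z' where z': "(\<lambda>e. g e + z' e *s q) \<in> circuit_variety TYPE('n) ?E' (mdelete indep p)"
    "\<not> (\<exists>H'. chyperplane H' \<and> (\<forall>e\<in>?E'. g e + z' e *s q \<in> H'))"
    using L' hyp B qH unfolding liftable_def by blast
  define L where "L = (\<lambda>e. g e + z' e *s q)"
  have VM': "clin_dependent S L" if "S \<subseteq> ?E'" "\<not> indep S" for S
    using z'(1) that unfolding circuit_variety_def dep_delete L_def by blast
  have spE': "cspan_fam ?E' L = UNIV" using span_from_N[OF fE', of "\<lambda>e. g e + z' e *s q"] z'(2) unfolding L_def by blast
  have generic: "\<exists>z. (\<lambda>e. g e + z e *s q) \<in> circuit_variety TYPE('n) E indep \<and>
             \<not> (\<exists>H'. chyperplane H' \<and> (\<forall>e\<in>E. g e + z e *s q \<in> H'))"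
    if a1: "\<And>S. S \<subseteq> ?E' \<Longrightarrow> \<not> indep S \<Longrightarrow> clin_dependent S (\<lambda>e. g e + z e *s q)"
      and circ: "\<And>C. circuit E indep C \<Longrightarrow> card C = ?n \<Longrightarrow> p \<in> C \<Longrightarrow> clin_dependent C (\<lambda>e. g e + z e *s q)"
      and sp: "cspan_fam E (\<lambda>e. g e + z e *s q) = UNIV"
    for z
  proof -
    have "(\<lambda>e. g e + z e *s q) \<in> circuit_variety TYPE('n) E indep \<and>
             \<not> (\<exists>H'. chyperplane H' \<and> (\<forall>e\<in>E. g e + z e *s q \<in> H'))"
      by (rule lift_goal[OF fE _ sp]) (rule V_reduce[OF M P a1 circ], auto)
    then show ?thesis by blast
  qed
  have spL: "cspan_fam E L = UNIV" using spE' cspan_mono[OF fE, of ?E' L] by auto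
  show ?thesis
  proof (cases "\<exists>S0. dep_hyperplane ?n E indep S0 \<and> p \<in> S0")
    case False
    show ?thesis
    proof (rule generic[of z'])
      show "\<And>S. S \<subseteq> ?E' \<Longrightarrow> \<not> indep S \<Longrightarrow> clin_dependent S (\<lambda>e. g e + z' e *s q)"
        using VM' unfolding L_def by blast
      show "cspan_fam E (\<lambda>e. g e + z' e *s q) = UNIV" using spL unfolding L_def .
      fix C assume C: "circuit E indep C" "card C = ?n" "p \<in> C"
      then obtain S where "dep_hyperplane ?n E indep S" "C \<subseteq> S" using hyp_through_circuit[OF M] by blast
      then show "clin_dependent C (\<lambda>e. g e + z' e *s q)" using False C(3) by blast
    qed
  next
    case True
    then obtain S0 where S0: "dep_hyperplane ?n E indep S0" "p \<in> S0" by blast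
    have S0E: "S0 \<subseteq> E" using S0(1) unfolding dep_hyperplane_def hyp_candidate_def by blast
    have S0c: "circuit E indep T" if "T \<subseteq> S0" "card T = ?n" for T
      using S0(1) that unfolding dep_hyperplane_def hyp_candidate_def by blast
    have CS0: "C \<subseteq> S0" if CC: "circuit E indep C" "card C = ?n" "p \<in> C" for C
    proof -
      obtain S where S: "dep_hyperplane ?n E indep S" "C \<subseteq> S" using hyp_through_circuit[OF M CC(1,2)] by blast
      then have "S = S0" using deg_le1_unique[OF M d S(1) _ S0] CC(3) by blast
      then show ?thesis using S by blast
    qed
    have Cfacts: "finite C \<and> C - {p} \<subseteq> S0 - {p} \<and> card (C - {p}) + 1 = ?n \<and> insert p (C - {p}) = C \<and> finite (C - {p})"
      if CC: "circuit E indep C" "card C = ?n" "p \<in> C" for C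
    proof -
      have fC: "finite C" using CS0[OF CC] S0E fE rev_finite_subset by blast
      have "card (C - {p}) = card C - 1" using fC CC(3) by simp
      moreover have "card C \<ge> 1" using CC(3) fC card_0_eq[OF fC] by (cases "card C") auto
      ultimately show ?thesis using fC CS0[OF CC] CC by auto
    qed
    show ?thesis
    proof (cases "\<forall>D. D \<subseteq> S0 - {p} \<longrightarrow> card D + 1 = ?n \<longrightarrow> clin_dependent D L")
      case True
      show ?thesis
      proof (rule generic[of z'])
        show "\<And>S. S \<subseteq> ?E' \<Longrightarrow> \<not> indep S \<Longrightarrow> clin_dependent S (\<lambda>e. g e + z' e *s q)"
          using VM' unfolding L_def by blast
        show "cspan_fam E (\<lambda>e. g e + z' e *s q) = UNIV" using spL unfolding L_def .
        fix C assume C: "circuit E indep C" "card C = ?n" "p \<in> C"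
        then have "clin_dependent (C - {p}) L" using True Cfacts by blast
        then show "clin_dependent C (\<lambda>e. g e + z' e *s q)"
          using clin_dep_mono[of C "C - {p}" L] Cfacts[OF C] unfolding L_def by blast
      qed
    next
      case False
      then obtain D0 where D0: "D0 \<subseteq> S0 - {p}" "card D0 + 1 = ?n" "\<not> clin_dependent D0 L" by blast
      have fS0: "finite S0" using S0E fE rev_finite_subset by blast
      have fD0: "finite D0" using D0(1) fS0 rev_finite_subset by blast
      have EXCH: "cspan_fam D0 L \<subseteq> cspan_fam D L"
        if DD: "D \<subseteq> S0 - {p}" "card D + 1 = ?n" "\<not> clin_dependent D L" for D
      proof (rule cspan_sub[OF fD0])
        show fD: "finite D" using DD(1) fS0 rev_finite_subset by blast
        fix y assume y: "y \<in> D0"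
        show "L y \<in> cspan_fam D L"
        proof (cases "y \<in> D")
          case True then show ?thesis using cspan_base[OF fD] by blast
        next
          case False
          have yS: "y \<in> S0 - {p}" using y D0(1) by blast
          have "insert y D \<subseteq> S0" using yS DD(1) by blast
          moreover have "card (insert y D) = ?n" using fD False DD(2) by simp
          ultimately have "circuit E indep (insert y D)" using S0c by blast
          then have "\<not> indep (insert y D)" unfolding circuit_def by blast
          moreover have "insert y D \<subseteq> ?E'" using yS DD(1) S0E by blast
          ultimately have "clin_dependent (insert y D) L" using VM' by blast
          then show ?thesis using dep_insert_cases[OF fD False] DD(3) by blast
        qed
      qed
      show ?thesis
      proof (cases "q \<in> cspan_fam D0 L")
        case False
        obtain i where i: "i \<notin> D0" using fresh_nat fD0 by blast
        have e1: "clin_dependent D0 (L(i := q)) = clin_dependent D0 L"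
          using i by (intro clin_dep_cong) auto
        have e2: "cspan_fam D0 (L(i := q)) = cspan_fam D0 L"
          using i by (intro cspan_cong) auto
        have "\<not> clin_dependent (insert i D0) (L(i := q))"
          using indep_insert[OF fD0 i, of "L(i := q)"] e1 e2 False D0(3) by simp
        then have "cspan_fam (insert i D0) (L(i := q)) = UNIV"
          using span_indep[of "insert i D0" "L(i := q)"] fD0 D0(2) i by simp
        then obtain c where c: "g p = (\<Sum>e\<in>insert i D0. c e *s (L(i := q)) e)"
          unfolding cspan_fam_def by blast
        then have gp: "g p = c i *s q + (\<Sum>e\<in>D0. c e *s L e)"
          using sum_insert_upd[OF fD0 i, of c L q] by simp
        define z where "z = z'(p := - c i)"
        define Lz where "Lz = (\<lambda>e. g e + z e *s q)"
        have LzL: "Lz e = L e" if "e \<noteq> p" for e using that unfolding Lz_def L_def z_def by simp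
        have Lzp: "Lz p \<in> cspan_fam D0 L"
        proof -
          have "Lz p = (\<Sum>e\<in>D0. c e *s L e)" unfolding Lz_def z_def using gp
            by (simp add: algebra_simps)
          then show ?thesis using cspan_sum[OF fD0] by simp
        qed
        show ?thesis
        proof (rule generic[of z])
          show "\<And>S. S \<subseteq> ?E' \<Longrightarrow> \<not> indep S \<Longrightarrow> clin_dependent S (\<lambda>e. g e + z e *s q)"
          proof -
            fix S assume S: "S \<subseteq> ?E'" "\<not> indep S"
            have "clin_dependent S Lz = clin_dependent S L" using S(1) LzL by (intro clin_dep_cong) auto
            then show "clin_dependent S (\<lambda>e. g e + z e *s q)" using VM'[OF S] unfolding Lz_def by simp
          qed
          have "cspan_fam ?E' Lz = cspan_fam ?E' L" using LzL by (intro cspan_cong) auto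
          then show "cspan_fam E (\<lambda>e. g e + z e *s q) = UNIV"
            using spE' cspan_mono[OF fE, of ?E' Lz] unfolding Lz_def by auto
          fix C assume C: "circuit E indep C" "card C = ?n" "p \<in> C"
          note cf = Cfacts[OF C]
          let ?D = "C - {p}"
          have eqD: "clin_dependent ?D Lz = clin_dependent ?D L" using LzL by (intro clin_dep_cong) auto
          have eqS: "cspan_fam ?D Lz = cspan_fam ?D L" using LzL by (intro cspan_cong) auto
          show "clin_dependent C (\<lambda>e. g e + z e *s q)"
          proof (cases "clin_dependent ?D L")
            case True
            then show ?thesis using eqD clin_dep_mono[of C ?D Lz] cf unfolding Lz_def by blast
          next
            case False
            then have "Lz p \<in> cspan_fam ?D Lz" using EXCH[of ?D] cf Lzp eqS by blast
            then have "clin_dependent (insert p ?D) Lz" using in_cspan_dep[of ?D p Lz] cf by blast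
            then show ?thesis using cf unfolding Lz_def by simp
          qed
        qed
      next
        case True
        define z where "z = (\<lambda>e. if e = p then (1::complex) else 0)"
        define Lz where "Lz = (\<lambda>e. g e + z e *s q)"
        have Lzg: "Lz e = g e" if "e \<noteq> p" for e using that unfolding Lz_def z_def by simp
        show ?thesis
        proof (rule generic[of z])
          show "\<And>S. S \<subseteq> ?E' \<Longrightarrow> \<not> indep S \<Longrightarrow> clin_dependent S (\<lambda>e. g e + z e *s q)"
          proof -
            fix S assume S: "S \<subseteq> ?E'" "\<not> indep S"
            have "clin_dependent S Lz"
            proof (rule clin_dep_hyp[OF a0])
              show "finite S" using S(1) fE' rev_finite_subset by blast
              have "S \<subseteq> E" using S(1) by blast
              then show "?n \<le> card S" using dep_card[OF M P _ S(2)] by blast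
              fix e assume "e \<in> S"
              then have "e \<noteq> p" "e \<in> E" using S(1) by auto
              then show "dotc a (Lz e) = 0" using Lzg gH by simp
            qed
            then show "clin_dependent S (\<lambda>e. g e + z e *s q)" unfolding Lz_def .
          qed
          show "cspan_fam E (\<lambda>e. g e + z e *s q) = UNIV"
          proof -
            have c1: "cspan_fam ?E' g = cspan_fam ?E' Lz" using Lzg by (intro cspan_cong) auto
            have sub: "{x. dotc a x = 0} \<subseteq> cspan_fam E Lz"
              using B c1 cspan_mono[OF fE, of ?E' Lz] by auto
            have qeq: "q = Lz p - g p" unfolding Lz_def z_def by simp
            have l1: "Lz p \<in> cspan_fam E Lz" using cspan_base[OF fE pE] .
            have l2: "g p \<in> cspan_fam E Lz" using sub gH[OF pE] by blast
            have "Lz p - g p \<in> cspan_fam E Lz" by (rule cspan_diff[OF fE l1 l2])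
            then have qin: "q \<in> cspan_fam E Lz" using qeq by simp
            have "x \<in> cspan_fam E Lz" for x
            proof -
              let ?t = "dotc a x / dotc a q"
              have "x - ?t *s q \<in> cspan_fam E Lz" using sub decomp_hyp[OF aq] by blast
              moreover have "?t *s q \<in> cspan_fam E Lz" using cspan_scale[OF fE qin] .
              ultimately have "(x - ?t *s q) + ?t *s q \<in> cspan_fam E Lz" using cspan_add[OF fE] by blast
              then show ?thesis by simp
            qed
            then show ?thesis unfolding Lz_def by blast
          qed
          fix C assume C: "circuit E indep C" "card C = ?n" "p \<in> C"
          note cf = Cfacts[OF C]
          let ?D = "C - {p}"
          have fD: "finite ?D" using cf by blast
          have DE: "\<And>e. e \<in> ?D \<Longrightarrow> dotc a (g e) = 0" using cf S0E gH by blast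
          have "clin_dependent ?D g"
          proof (cases "clin_dependent ?D L")
            case True
            then obtain c e2 where c: "e2 \<in> ?D" "c e2 \<noteq> 0" "(\<Sum>e\<in>?D. c e *s L e) = 0"
              unfolding clin_dependent_def by blast
            have c3: "(\<Sum>e\<in>?D. c e *s (g e + z' e *s q)) = 0" using c(3) unfolding L_def .
            have "(\<Sum>e\<in>?D. c e *s g e) = 0 \<and> (\<Sum>e\<in>?D. c e * z' e) = 0"
              using liftdep[OF aq DE, where c=c and z=z'] c3 by (rule iffD1)
            then have "(\<Sum>e\<in>?D. c e *s g e) = 0" by blast
            then show ?thesis unfolding clin_dependent_def using c by blast
          next
            case False
            have "cspan_fam D0 L \<subseteq> cspan_fam ?D L" by (rule EXCH) (use cf False in auto)
            then have "q \<in> cspan_fam ?D L" using True by blast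
            then obtain c where c: "q = (\<Sum>e\<in>?D. c e *s L e)" unfolding cspan_fam_def by blast
            then have qe: "q = (\<Sum>e\<in>?D. c e *s g e) + (\<Sum>e\<in>?D. c e * z' e) *s q"
              using lift_sum[of c g z' q ?D] unfolding L_def by simp
            have dg: "dotc a (\<Sum>e\<in>?D. c e *s g e) = 0" using DE by (simp add: dotc_sum)
            have "dotc a q = dotc a ((\<Sum>e\<in>?D. c e *s g e) + (\<Sum>e\<in>?D. c e * z' e) *s q)"
              using qe by simp
            then have "dotc a q = (\<Sum>e\<in>?D. c e * z' e) * dotc a q" using dg by simp
            then have s1: "(\<Sum>e\<in>?D. c e * z' e) = 1" using aq by simp
            then have sg: "(\<Sum>e\<in>?D. c e *s g e) = 0" using qe by simp
            have "\<exists>e\<in>?D. c e \<noteq> 0"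
            proof (rule ccontr)
              assume "\<not> ?thesis"
              then have "(\<Sum>e\<in>?D. c e * z' e) = 0" by simp
              then show False using s1 by simp
            qed
            then show ?thesis unfolding clin_dependent_def using sg by blast
          qed
          moreover have "clin_dependent ?D g = clin_dependent ?D Lz" using Lzg by (intro clin_dep_cong) auto
          ultimately have "clin_dependent ?D Lz" by simp
          then show "clin_dependent C (\<lambda>e. g e + z e *s q)"
            using clin_dep_mono[of C ?D Lz] cf unfolding Lz_def by blast
        qed
      qed
    qed
  qed
qed


lemma bw_finite:
  fixes x :: "nat \<Rightarrow> 'b \<Rightarrow> complex"
  assumes "finite F" "\<And>k e. e \<in> F \<Longrightarrow> norm (x k e) \<le> C"
  shows "\<exists>r l. strict_mono r \<and> (\<forall>e\<in>F. (\<lambda>k. x (r k) e) \<longlonglongrightarrow> l e)"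
  using assms
proof (induction F rule: finite_induct)
  case empty
  show ?case using strict_mono_id by blast
next
  case (insert e0 F)
  obtain r l where r: "strict_mono r" "\<forall>e\<in>F. (\<lambda>k. x (r k) e) \<longlonglongrightarrow> l e"
    using insert.IH insert.prems by blast
  have "bounded (range (\<lambda>k. x (r k) e0))"
    unfolding bounded_iff using insert.prems by blast
  then obtain l2 r2 where r2: "strict_mono r2" "((\<lambda>k. x (r k) e0) \<circ> r2) \<longlonglongrightarrow> l2"
    using bounded_imp_convergent_subsequence by blast
  have sm: "strict_mono (r \<circ> r2)" using strict_mono_o[OF r(1) r2(1)] .
  have "\<forall>e\<in>insert e0 F. (\<lambda>k. x ((r \<circ> r2) k) e) \<longlonglongrightarrow> (l(e0 := l2)) e"
  proof
    fix e assume e: "e \<in> insert e0 F"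
    show "(\<lambda>k. x ((r \<circ> r2) k) e) \<longlonglongrightarrow> (l(e0 := l2)) e"
    proof (cases "e = e0")
      case True
      then show ?thesis using r2(2) by (simp add: o_def)
    next
      case False
      then have "e \<in> F" using e by blast
      then have "((\<lambda>k. x (r k) e) \<circ> r2) \<longlonglongrightarrow> l e" using LIMSEQ_subseq_LIMSEQ r(2) r2(1) by blast
      then show ?thesis using False by (simp add: o_def)
    qed
  qed
  then show ?case using sm by blast
qed

lemma tendsto_vsmult:
  fixes c :: "nat \<Rightarrow> complex" and v :: "nat \<Rightarrow> complex^'n"
  assumes "c \<longlonglongrightarrow> c0" "v \<longlonglongrightarrow> v0"
  shows "(\<lambda>k. c k *s v k) \<longlonglongrightarrow> c0 *s v0"
proof (rule vec_tendstoI)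
  fix i
  have "(\<lambda>k. c k * v k $ i) \<longlonglongrightarrow> c0 * v0 $ i"
    by (intro tendsto_mult assms(1) tendsto_vec_nth assms(2))
  then show "(\<lambda>k. (c k *s v k) $ i) \<longlonglongrightarrow> (c0 *s v0) $ i" by simp
qed

lemma near_tendsto:
  fixes G :: "nat \<Rightarrow> 'a::real_normed_vector"
  assumes "\<And>k. norm (G k - g0) < 1 / real (Suc k)"
  shows "G \<longlonglongrightarrow> g0"
proof -
  have "(\<lambda>k. G k - g0) \<longlonglongrightarrow> 0" by (rule LIMSEQ_norm_0) (rule assms)
  then have "(\<lambda>k. (G k - g0) + g0) \<longlonglongrightarrow> 0 + g0" by (intro tendsto_add tendsto_const)
  then show ?thesis by simp
qed

lemma indep_mono: "finite B \<Longrightarrow> B' \<subseteq> B \<Longrightarrow> \<not> clin_dependent B v \<Longrightarrow> \<not> clin_dependent B' v"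
  using clin_dep_mono by blast

lemma indep_elem_notin:
  assumes "finite B" "e \<in> B" "\<not> clin_dependent B v"
  shows "v e \<notin> cspan_fam (B - {e}) v"
proof
  assume "v e \<in> cspan_fam (B - {e}) v"
  then have "clin_dependent (insert e (B - {e})) v" using in_cspan_dep[of "B - {e}" e v] assms(1) by simp
  then show False using assms(2,3) by (simp add: insert_absorb)
qed

lemma empty_indep: "\<not> clin_dependent {} v"
  unfolding clin_dependent_def by simp

lemma exists_basis:
  fixes g :: "nat \<Rightarrow> complex^'n"
  assumes fE: "finite E" and H: "cspan_fam E g = {x. dotc a x = 0}" and aq: "dotc a q \<noteq> 0"
  shows "\<exists>B\<subseteq>E. card B + 1 = CARD('n) \<and> \<not> clin_dependent B g"
proof -
  have "m + 1 \<le> CARD('n) \<longrightarrow> (\<exists>B\<subseteq>E. card B = m \<and> \<not> clin_dependent B g)" for m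
  proof (induction m)
    case 0
    then show ?case using empty_indep by fastforce
  next
    case (Suc m)
    show ?case
    proof
      assume m: "Suc m + 1 \<le> CARD('n)"
      then obtain B where B: "B \<subseteq> E" "card B = m" "\<not> clin_dependent B g" using Suc by auto
      have fB: "finite B" using B(1) fE rev_finite_subset by blast
      obtain w where w: "dotc a w = 0" "w \<notin> cspan_fam B g"
        using exists_outside[OF aq fB, of g] B(2) m by auto
      have "\<exists>e\<in>E. g e \<notin> cspan_fam B g"
      proof (rule ccontr)
        assume "\<not> ?thesis"
        then have "cspan_fam E g \<subseteq> cspan_fam B g" using cspan_sub[OF fE fB] by blast
        then show False using w H by blast
      qed
      then obtain e where e: "e \<in> E" "g e \<notin> cspan_fam B g" by blast
      have eB: "e \<notin> B" using e(2) cspan_base[OF fB] by blast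
      have "\<not> clin_dependent (insert e B) g" using indep_insert[OF fB eB B(3) e(2)] .
      moreover have "card (insert e B) = Suc m" using fB eB B(2) by simp
      moreover have "insert e B \<subseteq> E" using e(1) B(1) by blast
      ultimately show "\<exists>B\<subseteq>E. card B = Suc m \<and> \<not> clin_dependent B g" by blast
    qed
  qed
  moreover have "CARD('n) - 1 + 1 \<le> CARD('n)" by simp
  ultimately obtain B where "B \<subseteq> E" "card B = CARD('n) - 1" "\<not> clin_dependent B g" by blast
  moreover have "CARD('n) \<ge> 1" by (simp add: Suc_leI)
  ultimately show ?thesis by (metis le_add_diff_inverse2)
qed

lemma two_bad:
  assumes fX: "finite X" and h1: "x + s1 *s w \<in> cspan_fam X g" and h2: "x + s2 *s w \<in> cspan_fam X g"
    and ne: "s1 \<noteq> s2"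
  shows "w \<in> cspan_fam X g \<and> x \<in> cspan_fam X g"
proof -
  have "(x + s1 *s w) - (x + s2 *s w) \<in> cspan_fam X g" using cspan_diff[OF fX h1 h2] .
  moreover have "(x + s1 *s w) - (x + s2 *s w) = (s1 - s2) *s w" by (simp add: vec_eq_iff algebra_simps)
  ultimately have "(s1 - s2) *s w \<in> cspan_fam X g" by simp
  then have "(1 / (s1 - s2)) *s ((s1 - s2) *s w) \<in> cspan_fam X g" using cspan_scale[OF fX] by blast
  moreover have c1: "(1 / (s1 - s2)) * (s1 - s2) = 1" using ne by simp
  have "(1 / (s1 - s2)) *s ((s1 - s2) *s w) = w" by (simp only: vector_smult_assoc c1 vector_smult_lid)
  ultimately have wi: "w \<in> cspan_fam X g" by simp
  have "(x + s1 *s w) - s1 *s w \<in> cspan_fam X g" using cspan_diff[OF fX h1 cspan_scale[OF fX wi]] .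
  then show ?thesis using wi by simp
qed


lemma norm_cscale: "norm (complex_of_real r *s (w::complex^'n)) = \<bar>r\<bar> * norm w"
  using scaleR_vec_eq[of r w] norm_scaleR[of r w] by simp

lemma dense_step:
  fixes g g0 :: "nat \<Rightarrow> complex^'n"
  assumes fE: "finite E" and aq: "dotc a q \<noteq> 0"
    and gE: "\<forall>e\<in>E. dotc a (g e) = 0 \<and> norm (g e - g0 e) < \<delta>"
    and B: "B \<subseteq> E" "\<not> clin_dependent B g"
    and T: "T \<subseteq> Sp" "\<not> clin_dependent T g" "card T + 1 < CARD('n)"
    and Sp: "Sp \<subseteq> E" "CARD('n) \<le> card Sp + 1"
  shows "\<exists>g' T'. (\<forall>e\<in>E. dotc a (g' e) = 0 \<and> norm (g' e - g0 e) < \<delta>) \<and> \<not> clin_dependent B g'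
     \<and> T' \<subseteq> Sp \<and> card T' = card T + 1 \<and> \<not> clin_dependent T' g'"
proof -
  have fSp: "finite Sp" using Sp(1) fE rev_finite_subset by blast
  have fT: "finite T" using T(1) fSp rev_finite_subset by blast
  have fB: "finite B" using B(1) fE rev_finite_subset by blast
  have "\<not> Sp \<subseteq> T"
  proof
    assume "Sp \<subseteq> T"
    then have "card Sp \<le> card T" using card_mono[OF fT] by blast
    then show False using T(3) Sp(2) by linarith
  qed
  then obtain e where e: "e \<in> Sp" "e \<notin> T" by blast
  have eE: "e \<in> E" using e Sp(1) by blast
  obtain w where w: "dotc a w = 0" "w \<notin> cspan_fam T g" using exists_outside[OF aq fT T(3)] by blast
  define sl where "sl = \<delta> - norm (g e - g0 e)"
  have sl: "sl > 0" using gE eE unfolding sl_def by auto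
  define r :: "nat \<Rightarrow> real" where "r j = real j * sl / (4 * (norm w + 1))" for j
  define s :: "nat \<Rightarrow> complex" where "s j = complex_of_real (r j)" for j
  have nw: "norm w + 1 > 0" by (simp add: add_nonneg_pos)
  have rinj: "r i \<noteq> r j" if "i \<noteq> j" for i j
    using that sl nw unfolding r_def by (auto simp: field_simps)
  have sinj: "s i \<noteq> s j" if "i \<noteq> j" for i j using rinj[OF that] unfolding s_def by simp
  define Bad1 where "Bad1 j = (g e + s j *s w \<in> cspan_fam T g)" for j
  define Bad2 where "Bad2 j = (e \<in> B \<and> g e + s j *s w \<in> cspan_fam (B - {e}) g)" for j
  have nb1: "\<not> (Bad1 i \<and> Bad1 j)" if "i \<noteq> j" for i j
    using two_bad[OF fT, of "g e" "s i" w g "s j"] sinj[OF that] w(2) unfolding Bad1_def by blast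
  have nb2: "\<not> (Bad2 i \<and> Bad2 j)" if "i \<noteq> j" for i j
  proof
    assume h: "Bad2 i \<and> Bad2 j"
    then have eB: "e \<in> B" unfolding Bad2_def by blast
    have "g e \<in> cspan_fam (B - {e}) g"
      using two_bad[of "B - {e}" "g e" "s i" w g "s j"] fB h sinj[OF that] unfolding Bad2_def by blast
    then show False using indep_elem_notin[OF fB eB B(2)] by blast
  qed
  have "\<exists>j\<in>{1,2,3::nat}. \<not> Bad1 j \<and> \<not> Bad2 j"
    using nb1[of 1 2] nb1[of 1 3] nb1[of 2 3] nb2[of 1 2] nb2[of 1 3] nb2[of 2 3] by auto
  then obtain j where j0: "j \<in> {1,2,3::nat}" and j12: "\<not> Bad1 j" "\<not> Bad2 j" by blast
  have j: "j \<le> 3" "\<not> Bad1 j" "\<not> Bad2 j" using j0 j12 by auto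
  define g' where "g' = g(e := g e + s j *s w)"
  have g'o: "g' x = g x" if "x \<noteq> e" for x using that unfolding g'_def by simp
  have g'e: "g' e = g e + s j *s w" unfolding g'_def by simp
  have rj: "r j * norm w < sl"
  proof -
    have "r j \<ge> 0" unfolding r_def using sl nw by simp
    then have "r j * norm w \<le> r j * (norm w + 1)" by (simp add: mult_left_mono)
    also have "r j * (norm w + 1) = real j * sl / 4" unfolding r_def using nw by (simp add: field_simps)
    also have "\<dots> < sl" using j(1) sl by simp
    finally show ?thesis .
  qed
  have part1: "\<forall>x\<in>E. dotc a (g' x) = 0 \<and> norm (g' x - g0 x) < \<delta>"
  proof
    fix x assume x: "x \<in> E"
    show "dotc a (g' x) = 0 \<and> norm (g' x - g0 x) < \<delta>"
    proof (cases "x = e")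
      case False then show ?thesis using gE x g'o by simp
    next
      case True
      have "dotc a (g' x) = 0" using True g'e gE eE w(1) by simp
      moreover have "norm (g' x - g0 x) < \<delta>"
      proof -
        have "g' x - g0 x = (g e - g0 e) + s j *s w" using True g'e by simp
        then have "norm (g' x - g0 x) \<le> norm (g e - g0 e) + norm (s j *s w)"
          using norm_triangle_ineq by metis
        moreover have "norm (s j *s w) = r j * norm w"
          unfolding s_def norm_cscale using sl nw by (simp add: r_def)
        ultimately show ?thesis using rj unfolding sl_def by simp
      qed
      ultimately show ?thesis by blast
    qed
  qed
  have part2: "\<not> clin_dependent B g'"
  proof (cases "e \<in> B")
    case False
    have "clin_dependent B g' = clin_dependent B g" using False by (intro clin_dep_cong g'o) auto
    then show ?thesis using B(2) by simp
  next
    case True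
    have fB': "finite (B - {e})" using fB by simp
    have c1: "clin_dependent (B - {e}) g' = clin_dependent (B - {e}) g" using g'o by (intro clin_dep_cong) auto
    have c2: "cspan_fam (B - {e}) g' = cspan_fam (B - {e}) g" using g'o by (intro cspan_cong) auto
    have "\<not> clin_dependent (B - {e}) g" using indep_mono[OF fB _ B(2)] by blast
    moreover have "g' e \<notin> cspan_fam (B - {e}) g" using j(3) True g'e unfolding Bad2_def by simp
    ultimately have "\<not> clin_dependent (insert e (B - {e})) g'"
      using indep_insert[OF fB', of e g'] c1 c2 by simp
    then show ?thesis using True by (simp add: insert_absorb)
  qed
  have part3: "\<not> clin_dependent (insert e T) g'"
  proof -
    have c1: "clin_dependent T g' = clin_dependent T g" using e(2) by (intro clin_dep_cong g'o) auto
    have c2: "cspan_fam T g' = cspan_fam T g" using e(2) by (intro cspan_cong g'o) auto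
    have "g' e \<notin> cspan_fam T g" using j(2) g'e unfolding Bad1_def by simp
    then show ?thesis using indep_insert[OF fT e(2), of g'] c1 c2 T(2) by simp
  qed
  have "insert e T \<subseteq> Sp" "card (insert e T) = card T + 1" using e T(1) fT by auto
  then show ?thesis using part1 part2 part3 by blast
qed

lemma dense:
  fixes g0 :: "nat \<Rightarrow> complex^'n"
  assumes fE: "finite E" and aq: "dotc a q \<noteq> 0"
    and g0H: "\<And>e. e \<in> E \<Longrightarrow> dotc a (g0 e) = 0"
    and B: "B \<subseteq> E" "\<not> clin_dependent B g0"
    and Sp: "Sp \<subseteq> E" "CARD('n) \<le> card Sp + 1"
    and dp: "\<delta> > 0"
  shows "\<exists>g. (\<forall>e\<in>E. dotc a (g e) = 0 \<and> norm (g e - g0 e) < \<delta>) \<and> \<not> clin_dependent B g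
     \<and> (\<exists>T\<subseteq>Sp. card T + 1 = CARD('n) \<and> \<not> clin_dependent T g)"
proof -
  have "m + 1 \<le> CARD('n) \<longrightarrow> (\<exists>g T. (\<forall>e\<in>E. dotc a (g e) = 0 \<and> norm (g e - g0 e) < \<delta>)
      \<and> \<not> clin_dependent B g \<and> T \<subseteq> Sp \<and> card T = m \<and> \<not> clin_dependent T g)" for m
  proof (induction m)
    case 0
    have "\<forall>e\<in>E. dotc a (g0 e) = 0 \<and> norm (g0 e - g0 e) < \<delta>" using g0H dp by simp
    then show ?case using B(2) empty_indep by fastforce
  next
    case (Suc m)
    show ?case
    proof
      assume m: "Suc m + 1 \<le> CARD('n)"
      then obtain g T where gT: "\<forall>e\<in>E. dotc a (g e) = 0 \<and> norm (g e - g0 e) < \<delta>"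
        "\<not> clin_dependent B g" "T \<subseteq> Sp" "card T = m" "\<not> clin_dependent T g" using Suc by auto
      have "card T + 1 < CARD('n)" using gT(4) m by simp
      then show "\<exists>g T. (\<forall>e\<in>E. dotc a (g e) = 0 \<and> norm (g e - g0 e) < \<delta>)
          \<and> \<not> clin_dependent B g \<and> T \<subseteq> Sp \<and> card T = Suc m \<and> \<not> clin_dependent T g"
        using dense_step[OF fE aq gT(1) B(1) gT(2) gT(3) gT(5) _ Sp] gT(4) by auto
    qed
  qed
  moreover have "CARD('n) - 1 + 1 \<le> CARD('n)" by simp
  ultimately obtain g T where "(\<forall>e\<in>E. dotc a (g e) = 0 \<and> norm (g e - g0 e) < \<delta>)"
      "\<not> clin_dependent B g" "T \<subseteq> Sp" "card T = CARD('n) - 1" "\<not> clin_dependent T g" by blast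
  moreover have "CARD('n) \<ge> 1" by (simp add: Suc_leI)
  ultimately show ?thesis by (metis le_add_diff_inverse2)
qed


lemma witness_exists:
  fixes g0 :: "nat \<Rightarrow> complex^'n" and I :: "nat set \<Rightarrow> bool"
  assumes fE: "finite E" and aq: "dotc a q \<noteq> 0"
    and H0: "cspan_fam E g0 = {x. dotc a x = 0}"
    and W0: "\<forall>z. (\<lambda>e. g0 e + z e *s q) \<in> circuit_variety TYPE('n) E I \<longrightarrow>
               (\<exists>H'. chyperplane H' \<and> (\<forall>e\<in>E. g0 e + z e *s q \<in> H'))"
    and Sp: "Sp \<subseteq> E" "CARD('n) \<le> card Sp + 1"
  shows "\<exists>g1. (\<forall>e\<in>E. dotc a (g1 e) = 0) \<and> (\<exists>T\<subseteq>Sp. card T + 1 = CARD('n) \<and> \<not> clin_dependent T g1) \<and>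
    (\<forall>z. (\<lambda>e. g1 e + z e *s q) \<in> circuit_variety TYPE('n) E I \<longrightarrow>
               (\<exists>H'. chyperplane H' \<and> (\<forall>e\<in>E. g1 e + z e *s q \<in> H')))"
proof (rule ccontr)
  assume NW0: "\<not> ?thesis"
  have g0H: "dotc a (g0 e) = 0" if "e \<in> E" for e using cspan_base[OF fE that, of g0] H0 by blast
  obtain B where B: "B \<subseteq> E" "card B + 1 = CARD('n)" "\<not> clin_dependent B g0"
    using exists_basis[OF fE H0 aq] by blast
  have fB: "finite B" using B(1) fE rev_finite_subset by blast
  have "\<forall>k. \<exists>g. (\<forall>e\<in>E. dotc a (g e) = 0 \<and> norm (g e - g0 e) < 1 / real (Suc k)) \<and> \<not> clin_dependent B g
     \<and> (\<exists>T\<subseteq>Sp. card T + 1 = CARD('n) \<and> \<not> clin_dependent T g)"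
    using dense[OF fE aq _ B(1) B(3) Sp] g0H by simp
  then obtain G where G: "\<And>k. (\<forall>e\<in>E. dotc a (G k e) = 0 \<and> norm (G k e - g0 e) < 1 / real (Suc k))"
    "\<And>k. \<not> clin_dependent B (G k)" "\<And>k. (\<exists>T\<subseteq>Sp. card T + 1 = CARD('n) \<and> \<not> clin_dependent T (G k))"
    using choice[of "\<lambda>k g. (\<forall>e\<in>E. dotc a (g e) = 0 \<and> norm (g e - g0 e) < 1 / real (Suc k)) \<and> \<not> clin_dependent B g
     \<and> (\<exists>T\<subseteq>Sp. card T + 1 = CARD('n) \<and> \<not> clin_dependent T g)"] by blast
  have GH: "dotc a (G k e) = 0" if "e \<in> E" for k e using G(1) that by blast
  have "\<forall>k. \<exists>z. (\<lambda>e. G k e + z e *s q) \<in> circuit_variety TYPE('n) E I \<and>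
               \<not> (\<exists>H'. chyperplane H' \<and> (\<forall>e\<in>E. G k e + z e *s q \<in> H'))"
  proof
    fix k
    show "\<exists>z. (\<lambda>e. G k e + z e *s q) \<in> circuit_variety TYPE('n) E I \<and>
               \<not> (\<exists>H'. chyperplane H' \<and> (\<forall>e\<in>E. G k e + z e *s q \<in> H'))"
      using NW0 G(3)[of k] GH[of _ k] by blast
  qed
  then obtain Z where Z: "\<And>k. (\<lambda>e. G k e + Z k e *s q) \<in> circuit_variety TYPE('n) E I"
    "\<And>k. \<not> (\<exists>H'. chyperplane H' \<and> (\<forall>e\<in>E. G k e + Z k e *s q \<in> H'))"
    using choice[of "\<lambda>k z. (\<lambda>e. G k e + z e *s q) \<in> circuit_variety TYPE('n) E I \<and>
               \<not> (\<exists>H'. chyperplane H' \<and> (\<forall>e\<in>E. G k e + z e *s q \<in> H'))"] by blast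
  define L where "L k e = G k e + Z k e *s q" for k e
  have "\<forall>k. \<exists>A. A \<noteq> 0 \<and> (\<forall>b\<in>B. dotc A (L k b) = 0)"
  proof
    fix k
    have "cspan_fam B (L k) \<noteq> UNIV"
    proof
      assume "cspan_fam B (L k) = UNIV"
      then have "CARD('n) \<le> card B" using span_card[OF fB] by blast
      then show False using B(2) by simp
    qed
    then obtain A where "A \<noteq> 0" "\<forall>x\<in>cspan_fam B (L k). dotc A x = 0"
      using normal_exists[OF cspan_subspace[OF fB]] by blast
    then show "\<exists>A. A \<noteq> 0 \<and> (\<forall>b\<in>B. dotc A (L k b) = 0)" using cspan_base[OF fB] by blast
  qed
  then obtain A where A: "\<And>k. A k \<noteq> 0" "\<And>k b. b \<in> B \<Longrightarrow> dotc (A k) (L k b) = 0"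
    using choice[of "\<lambda>k A. A \<noteq> 0 \<and> (\<forall>b\<in>B. dotc A (L k b) = 0)"] by blast
  have aqk: "dotc (A k) q \<noteq> 0" for k
  proof
    assume A0: "dotc (A k) q = 0"
    have "dotc (A k) x = 0" if x: "dotc a x = 0" for x
    proof -
      have "x \<in> cspan_fam B (G k)"
        using indep_spans_hyp[OF aq fB G(2)[of k] B(2) _ x] GH B(1) by blast
      moreover have "dotc (A k) (G k b) = 0" if "b \<in> B" for b
        using A(2)[OF that, of k] A0 unfolding L_def by simp
      ultimately show ?thesis using cspan_in_hyp[OF fB] by blast
    qed
    then have "A k = 0" using perp_all[OF aq A0] by blast
    then show False using A(1) by blast
  qed
  define Wv where "Wv k e = dotc (A k) (L k e) / dotc (A k) q" for k e
  define N where "N k = (\<Sum>e\<in>E. cmod (Wv k e))" for k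
  have Npos: "N k > 0" for k
  proof -
    have N0: "N k \<ge> 0" unfolding N_def by (simp add: sum_nonneg)
    have "N k \<noteq> 0"
    proof
      assume "N k = 0"
      then have "\<forall>e\<in>E. cmod (Wv k e) = 0" unfolding N_def using sum_nonneg_eq_0_iff[OF fE, of "\<lambda>e. cmod (Wv k e)"] by simp
      then have "\<forall>e\<in>E. dotc (A k) (L k e) = 0" unfolding Wv_def using aqk[of k] by simp
      moreover have "chyperplane {x. dotc (A k) x = 0}" using A(1) hyperplane_ex by blast
      ultimately show False using Z(2)[of k] unfolding L_def by blast
    qed
    then show ?thesis using N0 by simp
  qed
  define W' where "W' k e = Wv k e / complex_of_real (N k)" for k e
  have W'B: "W' k b = 0" if "b \<in> B" for k b
    unfolding W'_def Wv_def using A(2)[OF that] by simp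
  have W'sum: "(\<Sum>e\<in>E. cmod (W' k e)) = 1" for k
  proof -
    have "(\<Sum>e\<in>E. cmod (W' k e)) = (\<Sum>e\<in>E. cmod (Wv k e) / N k)"
      unfolding W'_def using Npos[of k] by (simp add: norm_divide)
    also have "\<dots> = (\<Sum>e\<in>E. cmod (Wv k e)) / N k" by (rule sum_divide_distrib[symmetric])
    also have "\<dots> = N k / N k" unfolding N_def ..
    also have "\<dots> = 1" using Npos[of k] by simp
    finally show ?thesis .
  qed
  have W'bd: "cmod (W' k e) \<le> 1" if "e \<in> E" for k e
    using member_le_sum[OF that, of "\<lambda>e. cmod (W' k e)"] W'sum[of k] fE by simp
  have W'dep: "\<exists>c. (\<Sum>e\<in>S. cmod (c e)) = 1 \<and> (\<Sum>e\<in>S. c e *s G k e) = 0 \<and> (\<Sum>e\<in>S. c e * W' k e) = 0"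
    if S: "dependent_set E I S" for S k
  proof -
    have SE: "S \<subseteq> E" using S unfolding dependent_set_def by blast
    have fS: "finite S" using SE fE rev_finite_subset by blast
    have "clin_dependent S (L k)" using Z(1)[of k] S unfolding circuit_variety_def L_def by blast
    then obtain c0 e0 where c0: "e0 \<in> S" "c0 e0 \<noteq> 0" "(\<Sum>e\<in>S. c0 e *s L k e) = 0"
      unfolding clin_dependent_def by blast
    have SH: "\<And>e. e \<in> S \<Longrightarrow> dotc a (G k e) = 0" using GH SE by blast
    have c03: "(\<Sum>e\<in>S. c0 e *s (G k e + Z k e *s q)) = 0" using c0(3) unfolding L_def .
    have "(\<Sum>e\<in>S. c0 e *s G k e) = 0 \<and> (\<Sum>e\<in>S. c0 e * Z k e) = 0"
      using liftdep[OF aq SH, where c=c0 and z="Z k"] c03 by (rule iffD1)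
    then have sG: "(\<Sum>e\<in>S. c0 e *s G k e) = 0" by blast
    have "(\<Sum>e\<in>S. c0 e * Wv k e) = dotc (A k) (\<Sum>e\<in>S. c0 e *s L k e) / dotc (A k) q"
      unfolding Wv_def by (simp add: dotc_sum sum_divide_distrib)
    then have sW: "(\<Sum>e\<in>S. c0 e * Wv k e) = 0" using c0(3) by simp
    have sW': "(\<Sum>e\<in>S. c0 e * W' k e) = 0"
    proof -
      have "(\<Sum>e\<in>S. c0 e * W' k e) = (\<Sum>e\<in>S. c0 e * Wv k e) / complex_of_real (N k)"
        unfolding W'_def by (simp add: sum_divide_distrib)
      then show ?thesis using sW by simp
    qed
    define M0 where "M0 = (\<Sum>e\<in>S. cmod (c0 e))"
    have M0pos: "M0 > 0"
    proof -
      have "cmod (c0 e0) \<le> M0" unfolding M0_def using member_le_sum[OF c0(1), of "\<lambda>e. cmod (c0 e)"] fS by simp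
      moreover have "cmod (c0 e0) > 0" using c0(2) by simp
      ultimately show ?thesis by linarith
    qed
    define c where "c e = c0 e / complex_of_real M0" for e
    have "(\<Sum>e\<in>S. cmod (c e)) = 1"
    proof -
      have "(\<Sum>e\<in>S. cmod (c e)) = (\<Sum>e\<in>S. cmod (c0 e) / M0)"
        unfolding c_def using M0pos by (simp add: norm_divide)
      also have "\<dots> = (\<Sum>e\<in>S. cmod (c0 e)) / M0" by (rule sum_divide_distrib[symmetric])
      also have "\<dots> = M0 / M0" unfolding M0_def ..
      finally show ?thesis using M0pos by simp
    qed
    moreover have "(\<Sum>e\<in>S. c e *s G k e) = 0"
    proof -
      have "(\<Sum>e\<in>S. c e *s G k e) = (1 / complex_of_real M0) *s (\<Sum>e\<in>S. c0 e *s G k e)"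
        unfolding c_def by (simp add: vec.scale_sum_right vector_smult_assoc)
      then show ?thesis using sG by simp
    qed
    moreover have "(\<Sum>e\<in>S. c e * W' k e) = 0"
    proof -
      have "(\<Sum>e\<in>S. c e * W' k e) = (\<Sum>e\<in>S. c0 e * W' k e) / complex_of_real M0"
        unfolding c_def by (simp add: sum_divide_distrib)
      then show ?thesis using sW' by simp
    qed
    ultimately show ?thesis by blast
  qed
  obtain r w where r: "strict_mono r" "\<forall>e\<in>E. (\<lambda>k. W' (r k) e) \<longlonglongrightarrow> w e"
    using bw_finite[OF fE, of W' 1] W'bd by blast
  have Gconv: "(\<lambda>k. G k e) \<longlonglongrightarrow> g0 e" if "e \<in> E" for e
    by (rule near_tendsto) (use G(1) that in blast)
  have wB: "w b = 0" if "b \<in> B" for b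
  proof -
    have "(\<lambda>k. W' (r k) b) \<longlonglongrightarrow> w b" using r(2) that B(1) by blast
    moreover have "(\<lambda>k. W' (r k) b) = (\<lambda>k. 0)" using W'B[OF that] by simp
    ultimately show ?thesis using LIMSEQ_unique tendsto_const by metis
  qed
  have wsum: "(\<Sum>e\<in>E. cmod (w e)) = 1"
  proof -
    have "(\<lambda>k. \<Sum>e\<in>E. cmod (W' (r k) e)) \<longlonglongrightarrow> (\<Sum>e\<in>E. cmod (w e))"
      by (intro tendsto_sum tendsto_norm) (use r(2) in blast)
    moreover have "(\<lambda>k. \<Sum>e\<in>E. cmod (W' (r k) e)) = (\<lambda>k. 1)" using W'sum by simp
    ultimately show ?thesis using LIMSEQ_unique tendsto_const by metis
  qed
  obtain e0 where e0: "e0 \<in> E" "w e0 \<noteq> 0"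
  proof (rule ccontr)
    assume "\<not> thesis"
    then have "\<forall>e\<in>E. w e = 0" using that by blast
    then have "(\<Sum>e\<in>E. cmod (w e)) = 0" by simp
    then show False using wsum by simp
  qed
  have wV: "(\<lambda>e. g0 e + w e *s q) \<in> circuit_variety TYPE('n) E I"
    unfolding circuit_variety_def
  proof (intro CollectI allI impI)
    fix S assume S: "dependent_set E I S"
    have SE: "S \<subseteq> E" using S unfolding dependent_set_def by blast
    have fS: "finite S" using SE fE rev_finite_subset by blast
    obtain Cc where Cc: "\<And>k. (\<Sum>e\<in>S. cmod (Cc k e)) = 1" "\<And>k. (\<Sum>e\<in>S. Cc k e *s G (r k) e) = 0"
      "\<And>k. (\<Sum>e\<in>S. Cc k e * W' (r k) e) = 0"
      using choice[of "\<lambda>k c. (\<Sum>e\<in>S. cmod (c e)) = 1 \<and> (\<Sum>e\<in>S. c e *s G (r k) e) = 0 \<and> (\<Sum>e\<in>S. c e * W' (r k) e) = 0"]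
        W'dep[OF S] by blast
    have Ccbd: "cmod (Cc k e) \<le> 1" if "e \<in> S" for k e
      using member_le_sum[OF that, of "\<lambda>e. cmod (Cc k e)"] Cc(1)[of k] fS by simp
    obtain r2 cs where r2: "strict_mono r2" "\<forall>e\<in>S. (\<lambda>k. Cc (r2 k) e) \<longlonglongrightarrow> cs e"
      using bw_finite[OF fS, of Cc 1] Ccbd by blast
    have Gc: "(\<lambda>k. G (r (r2 k)) e) \<longlonglongrightarrow> g0 e" if "e \<in> S" for e
    proof -
      have "((\<lambda>k. G k e) \<circ> (r \<circ> r2)) \<longlonglongrightarrow> g0 e"
        using LIMSEQ_subseq_LIMSEQ[OF Gconv strict_mono_o[OF r(1) r2(1)]] that SE by blast
      then show ?thesis by (simp add: o_def)
    qed
    have Wc: "(\<lambda>k. W' (r (r2 k)) e) \<longlonglongrightarrow> w e" if "e \<in> S" for e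
    proof -
      have "((\<lambda>k. W' (r k) e) \<circ> r2) \<longlonglongrightarrow> w e"
        using LIMSEQ_subseq_LIMSEQ[OF _ r2(1)] r(2) that SE by blast
      then show ?thesis by (simp add: o_def)
    qed
    have csum: "(\<Sum>e\<in>S. cmod (cs e)) = 1"
    proof -
      have "(\<lambda>k. \<Sum>e\<in>S. cmod (Cc (r2 k) e)) \<longlonglongrightarrow> (\<Sum>e\<in>S. cmod (cs e))"
        by (intro tendsto_sum tendsto_norm) (use r2(2) in blast)
      moreover have "(\<lambda>k. \<Sum>e\<in>S. cmod (Cc (r2 k) e)) = (\<lambda>k. 1)" using Cc(1) by simp
      ultimately show ?thesis using LIMSEQ_unique tendsto_const by metis
    qed
    have cg: "(\<Sum>e\<in>S. cs e *s g0 e) = 0"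
    proof -
      have "(\<lambda>k. \<Sum>e\<in>S. Cc (r2 k) e *s G (r (r2 k)) e) \<longlonglongrightarrow> (\<Sum>e\<in>S. cs e *s g0 e)"
        by (intro tendsto_sum tendsto_vsmult) (use r2(2) Gc in blast)+
      moreover have "(\<lambda>k. \<Sum>e\<in>S. Cc (r2 k) e *s G (r (r2 k)) e) = (\<lambda>k. 0)" using Cc(2) by simp
      ultimately show ?thesis using LIMSEQ_unique tendsto_const by metis
    qed
    have cw: "(\<Sum>e\<in>S. cs e * w e) = 0"
    proof -
      have "(\<lambda>k. \<Sum>e\<in>S. Cc (r2 k) e * W' (r (r2 k)) e) \<longlonglongrightarrow> (\<Sum>e\<in>S. cs e * w e)"
        by (intro tendsto_sum tendsto_mult) (use r2(2) Wc in blast)+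
      moreover have "(\<lambda>k. \<Sum>e\<in>S. Cc (r2 k) e * W' (r (r2 k)) e) = (\<lambda>k. 0)" using Cc(3) by simp
      ultimately show ?thesis using LIMSEQ_unique tendsto_const by metis
    qed
    have "\<exists>e\<in>S. cs e \<noteq> 0"
    proof (rule ccontr)
      assume "\<not> ?thesis"
      then have "(\<Sum>e\<in>S. cmod (cs e)) = 0" by simp
      then show False using csum by simp
    qed
    moreover have "(\<Sum>e\<in>S. cs e *s (g0 e + w e *s q)) = 0"
      using lift_sum[of cs g0 w q S] cg cw by simp
    ultimately show "clin_dependent S (\<lambda>e. g0 e + w e *s q)" unfolding clin_dependent_def by blast
  qed
  then obtain H' where H': "chyperplane H'" "\<forall>e\<in>E. g0 e + w e *s q \<in> H'" using W0 by blast
  then obtain a' where a': "a' \<noteq> 0" "H' = {x. dotc a' x = 0}" unfolding hyperplane_ex by blast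
  have a'B: "dotc a' (g0 b) = 0" if bB: "b \<in> B" for b
  proof -
    have bE: "b \<in> E" using bB B(1) by blast
    have "g0 b + w b *s q \<in> H'" using H'(2) bE by blast
    then show ?thesis using a'(2) wB[OF bB] by simp
  qed
  have a'H: "dotc a' x = 0" if x: "dotc a x = 0" for x
  proof -
    have "x \<in> cspan_fam B g0" using indep_spans_hyp[OF aq fB B(3) B(2) _ x] g0H B(1) by blast
    then show ?thesis using cspan_in_hyp[OF fB] a'B by blast
  qed
  have "dotc a' (g0 e0 + w e0 *s q) = 0" using H'(2) a'(2) e0(1) by blast
  then have "w e0 * dotc a' q = 0" using a'H[OF g0H[OF e0(1)]] by simp
  then have "dotc a' q = 0" using e0(2) by simp
  then have "a' = 0" using perp_all[OF aq _ a'H] by blast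
  then show False using a'(1) by blast
qed


lemma part_i:
  fixes indep :: "nat set \<Rightarrow> bool"
  assumes M: "matroid E indep" and P: "paving CARD('n::finite) E indep" and pE: "p \<in> E"
    and L': "liftable TYPE('n) (E - {p}) (mdelete indep p)"
    and d: "mdeg CARD('n) E indep p \<le> 1"
  shows "liftable TYPE('n) E indep"
  unfolding liftable_def
proof (intro allI impI)
  fix g :: "nat \<Rightarrow> complex^'n" and H q
  assume h: "chyperplane H \<and> cspan_fam E g = H \<and> q \<notin> H"
  obtain a where a: "a \<noteq> 0" "H = {v. dotc a v = 0}" using h hyperplane_ex by blast
  have aq: "dotc a q \<noteq> 0" using h a(2) by blast
  have HH: "cspan_fam E g = {x. dotc a x = 0}" using h a(2) by blast
  show "\<exists>z. (\<lambda>e. g e + z e *s q) \<in> circuit_variety TYPE('n) E indep \<and>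
             \<not> (\<exists>H'. chyperplane H' \<and> (\<forall>e\<in>E. g e + z e *s q \<in> H'))"
  proof (cases "cspan_fam (E - {p}) g = {x. dotc a x = 0}")
    case True
    then show ?thesis using caseB[OF M P pE d HH aq True L'] by blast
  next
    case False
    then show ?thesis using caseA[OF M P pE d HH aq False] by blast
  qed
qed

lemma part_ii:
  fixes indep :: "nat set \<Rightarrow> bool"
  assumes M: "matroid E indep" and P: "paving CARD('n::finite) E indep" and pE: "p \<in> E"
    and NL: "\<not> liftable TYPE('n) (E - {p}) (mdelete indep p)"
    and d: "mdeg CARD('n) E indep p \<ge> 1"
  shows "\<not> liftable TYPE('n) E indep"
proof
  assume LM: "liftable TYPE('n) E indep"
  let ?E' = "E - {p}"
  let ?n = "CARD('n)"
  have fE: "finite E" using matroid_finite[OF M] .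
  have fE': "finite ?E'" using fE by simp
  obtain S where S: "dep_hyperplane ?n E indep S" "p \<in> S" using deg_ge1_ex[OF d] by blast
  have SE: "S \<subseteq> E" and Scard: "?n \<le> card S"
    and Sc: "\<And>T. T \<subseteq> S \<Longrightarrow> card T = ?n \<Longrightarrow> circuit E indep T"
    using S(1) unfolding dep_hyperplane_def hyp_candidate_def by blast+
  have fS: "finite S" using SE fE rev_finite_subset by blast
  obtain g0 H q where g0: "chyperplane H" "cspan_fam ?E' g0 = H" "q \<notin> H"
    "\<not> (\<exists>z. (\<lambda>e. g0 e + z e *s q) \<in> circuit_variety TYPE('n) ?E' (mdelete indep p) \<and>
           \<not> (\<exists>H'. chyperplane H' \<and> (\<forall>e\<in>?E'. g0 e + z e *s q \<in> H')))"
    using NL unfolding liftable_def by blast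
  obtain a where a: "a \<noteq> 0" "H = {v. dotc a v = 0}" using g0(1) hyperplane_ex by blast
  have aq: "dotc a q \<noteq> 0" using g0(3) a(2) by blast
  have H0: "cspan_fam ?E' g0 = {x. dotc a x = 0}" using g0(2) a(2) by blast
  have W0: "\<forall>z. (\<lambda>e. g0 e + z e *s q) \<in> circuit_variety TYPE('n) ?E' (mdelete indep p) \<longrightarrow>
               (\<exists>H'. chyperplane H' \<and> (\<forall>e\<in>?E'. g0 e + z e *s q \<in> H'))"
    using g0(4) by blast
  have Sp: "S - {p} \<subseteq> ?E'" "?n \<le> card (S - {p}) + 1" using SE Scard S(2) fS by auto
  obtain g1 T where g1: "\<forall>e\<in>?E'. dotc a (g1 e) = 0" "T \<subseteq> S - {p}" "card T + 1 = ?n"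
    "\<not> clin_dependent T g1"
    "\<forall>z. (\<lambda>e. g1 e + z e *s q) \<in> circuit_variety TYPE('n) ?E' (mdelete indep p) \<longrightarrow>
               (\<exists>H'. chyperplane H' \<and> (\<forall>e\<in>?E'. g1 e + z e *s q \<in> H'))"
    using witness_exists[OF fE' aq H0 W0 Sp] by blast
  have fT: "finite T" using g1(2) fS rev_finite_subset by blast
  have pT: "p \<notin> T" using g1(2) by blast
  have TE': "T \<subseteq> ?E'" using g1(2) SE by blast
  define g where "g = g1(p := 0)"
  have gg1: "g e = g1 e" if "e \<noteq> p" for e using that unfolding g_def by simp
  have gH: "dotc a (g e) = 0" if "e \<in> E" for e
    using that g1(1) unfolding g_def by (cases "e = p") auto
  have Hg: "cspan_fam E g = {x. dotc a x = 0}"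
  proof
    show "cspan_fam E g \<subseteq> {x. dotc a x = 0}" using cspan_in_hyp[OF fE, of a g] gH by blast
    show "{x. dotc a x = 0} \<subseteq> cspan_fam E g"
    proof
      fix x assume "x \<in> {x. dotc a x = 0}"
      then have "x \<in> cspan_fam T g1"
        using indep_spans_hyp[OF aq fT g1(4) g1(3)] g1(1) TE' by blast
      moreover have "cspan_fam T g1 = cspan_fam T g" using pT gg1 by (intro cspan_cong) (metis)
      moreover have "cspan_fam T g \<subseteq> cspan_fam E g" using cspan_mono[OF fE] TE' by blast
      ultimately show "x \<in> cspan_fam E g" by blast
    qed
  qed
  have hyp: "chyperplane {x. dotc a x = 0}" using a(1) hyperplane_ex by blast
  obtain z where z: "(\<lambda>e. g e + z e *s q) \<in> circuit_variety TYPE('n) E indep"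
    "\<not> (\<exists>H'. chyperplane H' \<and> (\<forall>e\<in>E. g e + z e *s q \<in> H'))"
  proof -
    have pre: "chyperplane {x. dotc a x = 0} \<and> cspan_fam E g = {x. dotc a x = 0} \<and> q \<notin> {x. dotc a x = 0}"
      using hyp Hg aq by simp
    show ?thesis using LM[unfolded liftable_def, rule_format, OF pre] that by blast
  qed
  define Lz where "Lz e = g e + z e *s q" for e
  have VM: "clin_dependent S' Lz" if "S' \<subseteq> E" "\<not> indep S'" for S'
    using z(1) that unfolding circuit_variety_def dependent_set_def Lz_def by blast
  have "(\<lambda>e. g1 e + z e *s q) \<in> circuit_variety TYPE('n) ?E' (mdelete indep p)"
    unfolding circuit_variety_def
  proof (intro CollectI allI impI)
    fix S' assume "dependent_set ?E' (mdelete indep p) S'"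
    then have S': "S' \<subseteq> ?E'" "\<not> indep S'" unfolding dep_delete by blast+
    then have "clin_dependent S' Lz" using VM by blast
    moreover have "clin_dependent S' Lz = clin_dependent S' (\<lambda>e. g1 e + z e *s q)"
      using S'(1) gg1 unfolding Lz_def by (intro clin_dep_cong) auto
    ultimately show "clin_dependent S' (\<lambda>e. g1 e + z e *s q)" by simp
  qed
  then obtain H' where H': "chyperplane H'" "\<forall>e\<in>?E'. g1 e + z e *s q \<in> H'" using g1(5) by blast
  obtain a' where a': "a' \<noteq> 0" "H' = {v. dotc a' v = 0}" using H'(1) hyperplane_ex by blast
  have LzE': "dotc a' (Lz e) = 0" if "e \<in> ?E'" for e
    using H'(2) a'(2) that gg1 unfolding Lz_def by auto
  have Lzp: "dotc a' (Lz p) \<noteq> 0"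
  proof
    assume "dotc a' (Lz p) = 0"
    then have "\<forall>e\<in>E. Lz e \<in> H'" using LzE' a'(2) by auto
    then show False using z(2) H'(1) unfolding Lz_def by blast
  qed
  have "insert p T \<subseteq> S" using g1(2) S(2) by blast
  moreover have "card (insert p T) = ?n" using fT pT g1(3) by simp
  ultimately have "circuit E indep (insert p T)" using Sc by blast
  then have "clin_dependent (insert p T) Lz" using VM unfolding circuit_def by blast
  then obtain c e0 where c: "e0 \<in> insert p T" "c e0 \<noteq> 0" "(\<Sum>e\<in>insert p T. c e *s Lz e) = 0"
    unfolding clin_dependent_def by blast
  have sum: "c p *s Lz p + (\<Sum>e\<in>T. c e *s Lz e) = 0" using c(3) fT pT by simp
  have TH: "\<And>e. e \<in> T \<Longrightarrow> dotc a (g1 e) = 0" using g1(1) TE' by blast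
  show False
  proof (cases "c p = 0")
    case True
    then have "(\<Sum>e\<in>T. c e *s (g1 e + z e *s q)) = 0"
    proof -
      have "(\<Sum>e\<in>T. c e *s Lz e) = (\<Sum>e\<in>T. c e *s (g1 e + z e *s q))"
      proof (rule sum.cong[OF refl])
        fix e assume "e \<in> T"
        then have "e \<noteq> p" using pT by blast
        then show "c e *s Lz e = c e *s (g1 e + z e *s q)" unfolding Lz_def using gg1 by simp
      qed
      then show ?thesis using sum True by simp
    qed
    then have "(\<Sum>e\<in>T. c e *s g1 e) = 0 \<and> (\<Sum>e\<in>T. c e * z e) = 0"
      using liftdep[where S=T and g=g1 and c=c and z=z, OF aq TH] by (rule iffD1[rotated])
    moreover have "e0 \<in> T" using c(1) c(2) True by auto
    ultimately have "clin_dependent T g1" unfolding clin_dependent_def using c(2) by blast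
    then show False using g1(4) by blast
  next
    case False
    have "dotc a' (c p *s Lz p + (\<Sum>e\<in>T. c e *s Lz e)) = 0" using sum by simp
    moreover have "dotc a' (\<Sum>e\<in>T. c e *s Lz e) = 0"
      using LzE' TE' by (simp add: dotc_sum subset_iff)
    ultimately have "c p * dotc a' (Lz p) = 0" by simp
    then show False using False Lzp by simp
  qed
qed

theorem lemma5p5:
  fixes indep :: "nat set \<Rightarrow> bool" and d p :: nat
  assumes "matroid {1..d} indep"
    and "paving CARD('n::finite) {1..d} indep"
    and "p \<in> {1..d}"
    and "\<exists>C. circuit {1..d} indep C \<and> p \<in> C"
  shows "(liftable TYPE('n) ({1..d} - {p}) (mdelete indep p) \<and> mdeg CARD('n) {1..d} indep p \<le> 1
            \<longrightarrow> liftable TYPE('n) {1..d} indep)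
       \<and> (\<not> liftable TYPE('n) ({1..d} - {p}) (mdelete indep p) \<and> mdeg CARD('n) {1..d} indep p \<ge> 1
            \<longrightarrow> \<not> liftable TYPE('n) {1..d} indep)"
  using part_i[OF assms(1,2,3)] part_ii[OF assms(1,2,3)] by blast


end
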